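(* Let $K$ be a closed braid diagram and let $K'$ be the result of negatively stabilizing $K$ once (so $\mathit{sl}(K')=\mathit{sl}(K)-2$). Let $\psi$ denote $\psi^+$ or $\psi^-$, and let $f\colon\mathcal{C}(K)\to\mathcal{C}(K')$ and $g\colon\mathcal{C}(K')\to\mathcal{C}(K)$ be the filtered chain maps giving Reidemeister I invariance for this negative stabilization. Then there are elements $\theta\in\mathcal{F}_{\mathit{sl}(K')}\mathcal{C}^{-1}(K)$ and $\theta'\in\mathcal{F}_{\mathit{sl}(K')}\mathcal{C}^{-1}(K')$, local in the sense described in the context, such that \[ g(\psi(K'))=\pm\psi(K)+\delta\theta\ \text{in }\mathcal{F}_{\mathit{sl}(K')}\mathcal{C}(K),\qquad f(\psi(K))=\pm\psi(K')+\delta\theta'\ \text{in }\mathcal{F}_{\mathit{sl}(K')}\mathcal{C}(K').\]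
   Context: Bar-Natan complex. Let $V=\mathbb{Z}\langle x_+,x_-\rangle$ with multiplication $m(x_+\otimes x_+)=x_+$, $m(x_+\otimes x_-)=m(x_-\otimes x_+)=x_-$, $m(x_-\otimes x_-)=x_-$, and comultiplication $\Delta(x_-)=x_-\otimes x_-$, $\Delta(x_+)=x_+\otimes x_-+x_-\otimes x_+-x_+\otimes x_+$. Put $x_{|}=x_--x_+$. For an oriented link diagram $K$ with $n$ ordered crossings ($n_+$ positive, $n_-$ negative), complete resolutions $K_v$ are indexed by $v\in\{0,1\}^n$, the orientation-respecting smoothing being the $0$-resolution at positive and the $1$-resolution at negative crossings. $\mathcal{C}(K)$ is freely generated by pairs $(v,x)$, $x$ a labeling of circles of $K_v$ by $x_\pm$, with Khovanov's cube-of-resolutions differential $\delta$ built from this $m,\Delta$. Gradings: $\mathrm{gr}_h(v,x)=-n_-+|v|$ ($\mathcal{C}^i$ = degree $i$), $\mathrm{gr}_q(v,x)=n_+-2n_-+|v|+\#x_+-\#x_-$ (not decreased by $\delta$); $\mathcal{F}_j\mathcal{C}$ = span of generators with $\mathrm{gr}_q\ge j$. For an orientation $o$, $\psi(o)$ is the cycle over the oriented resolution labeling each circle $C$ by $x_-$ or $x_{|}$ according as an arc from a point just to the left of $C$ to $\infty$ meets an even or odd number of circles. For $K$ the closure of a braid in $B_m$ with braid orientation $o$, $\psi^+(K)=\psi(o)$, $\psi^-(K)=\psi(-o)$, both in $\mathcal{F}_{\mathit{sl}(K)}\mathcal{C}^0(K)$, $\mathit{sl}(K)=n_+-n_--m$.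 Negative stabilization replaces the braid $B\in B_m$ by $B\sigma_m^{-1}\in B_{m+1}$, i.e. a negative Reidemeister I move with new crossing $c$. With $K'$ the stabilized diagram, $(K')_0\cong K$ and $(K')_1\cong K\sqcup U_0$ (resolving $c$); the generators of $\mathcal{C}((K')_1)$ with $U_0$ labeled $x_+$ span a subcomplex $D$ identified with $\mathcal{C}(K)$ (forgetting $U_0$, preserving gradings). The stabilization map $f$ is the inclusion $\mathcal{C}(K)\cong D\hookrightarrow\mathcal{C}(K')$; the remaining generators cancel in pairs via the arrows $x\mapsto x\otimes x_-$, and $g$ is the resulting filtered homotopy inverse. Locality: an element is local if it lies over vertices agreeing with the oriented-resolution vertex away from the new crossing and its labels on circles away from the stabilization region agree with those of the corresponding canonical cycle. *)

theory Defs
  imports Main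
begin

text \<open>Crossing k (0 <= k < length w) is the k-th letter.
  For the braid orientation (strands oriented upwards), sigma_i gives a positive crossing.\<close>

datatype bgen = Sig nat | SigInv nat

fun bidx :: "bgen \<Rightarrow> nat" where
  "bidx (Sig i) = i" | "bidx (SigInv i) = i"

fun bpos :: "bgen \<Rightarrow> bool" where
  "bpos (Sig i) = True" | "bpos (SigInv i) = False"

definition braid_word :: "nat \<Rightarrow> bgen list \<Rightarrow> bool" where
  "braid_word m w \<longleftrightarrow> (\<forall>e\<in>set w. 1 \<le> bidx e \<and> bidx e < m)"

definition npos :: "bgen list \<Rightarrow> nat" where
  "npos w = length (filter bpos w)"

definition nneg :: "bgen list \<Rightarrow> nat" where
  "nneg w = length (filter (\<lambda>e. \<not> bpos e) w)"

definition sl :: "bgen list \<Rightarrow> nat \<Rightarrow> int" where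
  "sl w m = int (npos w) - int (nneg w) - int m"

text \<open>Points (k, j): level k in {0..length w} (level k lies just below crossing k),
  strand position j in {1..m}. The closure joins level length w to level 0, the
  closing arcs running around to the right, so strand 1 is the outermost circle.
  A vertex v is the set of crossings resolved by the 1-resolution. The
  0-resolution of a positive crossing and the 1-resolution of a negative crossing
  are the oriented (vertical) smoothings.\<close>

definition pts :: "bgen list \<Rightarrow> nat \<Rightarrow> (nat \<times> nat) set" where
  "pts w m = {0..length w} \<times> {1..m}"

definition vertical :: "bgen list \<Rightarrow> nat set \<Rightarrow> nat \<Rightarrow> bool" where
  "vertical w v k \<longleftrightarrow> ((k \<in> v) = (\<not> bpos (w ! k)))"

definition adj :: "bgen list \<Rightarrow> nat \<Rightarrow> nat set \<Rightarrow> ((nat \<times> nat) \<times> (nat \<times> nat)) set" where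
  "adj w m v =
     {((k, j), (Suc k, j)) | k j. k < length w \<and> 1 \<le> j \<and> j \<le> m
          \<and> j \<noteq> bidx (w ! k) \<and> j \<noteq> Suc (bidx (w ! k))}
   \<union> {((k, j), (Suc k, j)) | k j. k < length w \<and> vertical w v k
          \<and> (j = bidx (w ! k) \<or> j = Suc (bidx (w ! k)))}
   \<union> {((k, bidx (w ! k)), (k, Suc (bidx (w ! k)))) | k. k < length w \<and> \<not> vertical w v k}
   \<union> {((Suc k, bidx (w ! k)), (Suc k, Suc (bidx (w ! k)))) | k. k < length w \<and> \<not> vertical w v k}
   \<union> {((length w, j), (0, j)) | j. 1 \<le> j \<and> j \<le> m}"

definition conn :: "bgen list \<Rightarrow> nat \<Rightarrow> nat set \<Rightarrow> ((nat \<times> nat) \<times> (nat \<times> nat)) set" where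
  "conn w m v = (adj w m v \<union> (adj w m v)\<inverse>)\<^sup>*"

definition circles :: "bgen list \<Rightarrow> nat \<Rightarrow> nat set \<Rightarrow> (nat \<times> nat) set set" where
  "circles w m v = {{q \<in> pts w m. (p, q) \<in> conn w m v} | p. p \<in> pts w m}"

section \<open>The Bar-Natan complex\<close>

text \<open>A generator (v, P): a vertex v together with a labeling of the circles of K_v,
  encoded by the set P of circles labeled x_+ (all others are labeled x_-).\<close>

type_synonym gen = "nat set \<times> (nat \<times> nat) set set"
type_synonym chain = "gen \<Rightarrow> int"

definition gens :: "bgen list \<Rightarrow> nat \<Rightarrow> gen set" where
  "gens w m = {(v, P). v \<subseteq> {..<length w} \<and> P \<subseteq> circles w m v}"

definition grh :: "bgen list \<Rightarrow> gen \<Rightarrow> int" where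
  "grh w g = int (card (fst g)) - int (nneg w)"

definition grq :: "bgen list \<Rightarrow> nat \<Rightarrow> gen \<Rightarrow> int" where
  "grq w m g = int (npos w) - 2 * int (nneg w) + int (card (fst g))
      + int (card (snd g)) - int (card (circles w m (fst g) - snd g))"

text \<open>Coefficient of the edge map (merge m or split Delta) from (v,P) to (v',P').\<close>
definition edge_coef :: "bgen list \<Rightarrow> nat \<Rightarrow> gen \<Rightarrow> gen \<Rightarrow> int" where
  "edge_coef w m g g' =
    (let A = circles w m (fst g); B = circles w m (fst g'); P = snd g; P' = snd g';
         Old = A - B; N = B - A in
     if P \<inter> (A \<inter> B) \<noteq> P' \<inter> (A \<inter> B) then 0
     else if card Old = 2 \<and> card N = 1 then (if (N \<subseteq> P') = (Old \<subseteq> P) then 1 else 0)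
     else if card Old = 1 \<and> card N = 2 then
       (if Old \<subseteq> P then
          (if card (N \<inter> P') = 1 then 1 else if card (N \<inter> P') = 2 then -1 else 0)
        else (if N \<inter> P' = {} then 1 else 0))
     else 0)"

definition dcoef :: "bgen list \<Rightarrow> nat \<Rightarrow> gen \<Rightarrow> gen \<Rightarrow> int" where
  "dcoef w m g g' =
    (if g \<in> gens w m \<and> g' \<in> gens w m then
       (\<Sum>c \<in> {..<length w} - fst g.
          if fst g' = insert c (fst g)
          then (-1) ^ card {c' \<in> fst g. c' < c} * edge_coef w m g g' else 0)
     else 0)"

definition khdiff :: "bgen list \<Rightarrow> nat \<Rightarrow> chain \<Rightarrow> chain" where
  "khdiff w m z = (\<lambda>g'. \<Sum>g \<in> gens w m. z g * dcoef w m g g')"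

text \<open>z lies in F_j C^i.\<close>
definition in_F :: "bgen list \<Rightarrow> nat \<Rightarrow> int \<Rightarrow> int \<Rightarrow> chain \<Rightarrow> bool" where
  "in_F w m j i z \<longleftrightarrow> (\<forall>g. z g \<noteq> 0 \<longrightarrow> g \<in> gens w m \<and> grh w g = i \<and> grq w m g \<ge> j)"

section \<open>The canonical cycles psi^+ and psi^-\<close>

definition vo :: "bgen list \<Rightarrow> nat set" where
  "vo w = {k. k < length w \<and> \<not> bpos (w ! k)}"

definition strand_circle :: "bgen list \<Rightarrow> nat \<Rightarrow> (nat \<times> nat) set" where
  "strand_circle w j = {0..length w} \<times> {j}"

text \<open>At the oriented resolution the circles are the concentric strand circles,
  strand 1 outermost. For the braid orientation (b = True) the left side of each
  circle is its outside, so circle j is labeled x_| iff j is even; for the reversed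
  orientation (b = False) the left side is the inside and circle j is labeled x_|
  iff j is odd. bar_circ is the set of circles labeled x_| = x_- - x_+.\<close>
definition bar_circ :: "bgen list \<Rightarrow> nat \<Rightarrow> bool \<Rightarrow> (nat \<times> nat) set set" where
  "bar_circ w m b = {strand_circle w j | j. 1 \<le> j \<and> j \<le> m \<and> even j = b}"

text \<open>psi w m True = psi^+, psi w m False = psi^-.\<close>
definition psi :: "bgen list \<Rightarrow> nat \<Rightarrow> bool \<Rightarrow> chain" where
  "psi w m b = (\<lambda>g. if fst g = vo w \<and> snd g \<subseteq> bar_circ w m b
                     then (-1) ^ card (snd g) else 0)"

text \<open>Coefficient of the basis label (x_+ iff inP) in the canonical label of C.\<close>
definition canon_coef :: "bgen list \<Rightarrow> nat \<Rightarrow> bool \<Rightarrow> (nat \<times> nat) set \<Rightarrow> bool \<Rightarrow> int" where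
  "canon_coef w m b C inP =
    (if C \<in> bar_circ w m b then (if inP then -1 else 1)
     else if (\<exists>j. 1 \<le> j \<and> j \<le> m \<and> C = strand_circle w j) then (if inP then 0 else 1)
     else 0)"

text \<open>z is local w.r.t. the crossings S of the stabilization region and the set Q of
  points of the stabilization region: z lies over vertices agreeing with the oriented
  vertex outside S, and on the circles not meeting Q, z is the tensor product of the
  canonical labels with some element on the remaining circles.\<close>
definition is_local :: "bgen list \<Rightarrow> nat \<Rightarrow> bool \<Rightarrow> nat set \<Rightarrow> (nat \<times> nat) set \<Rightarrow> chain \<Rightarrow> bool" where
  "is_local w m b S Q z \<longleftrightarrow>
     (\<forall>g. z g \<noteq> 0 \<longrightarrow> g \<in> gens w m \<and> (\<forall>k < length w. k \<notin> S \<longrightarrow> (k \<in> fst g \<longleftrightarrow> k \<in> vo w))) \<and>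
     (\<exists>u. \<forall>v P. (v, P) \<in> gens w m \<and> (\<forall>k < length w. k \<notin> S \<longrightarrow> (k \<in> v \<longleftrightarrow> k \<in> vo w)) \<longrightarrow>
        z (v, P) = u v (P \<inter> {C \<in> circles w m v. C \<inter> Q \<noteq> {}})
                   * (\<Prod>C \<in> {C \<in> circles w m v. C \<inter> Q = {}}. canon_coef w m b C (C \<in> P)))"

section \<open>Negative stabilization and the maps f, g\<close>

text \<open>K' is the closure of w @ [SigInv m] in B_(m+1); its new crossing is c = length w.
  U0 is the new strand circle of (K')_1; lift C is the circle of (K')_1 corresponding
  to the circle C of K.\<close>

definition U0 :: "bgen list \<Rightarrow> nat \<Rightarrow> (nat \<times> nat) set" where
  "U0 w m = {0..Suc (length w)} \<times> {Suc m}"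

definition lift :: "bgen list \<Rightarrow> (nat \<times> nat) set \<Rightarrow> (nat \<times> nat) set" where
  "lift w C = C \<union> {(Suc (length w), j) | j. (length w, j) \<in> C}"

text \<open>The generator of D corresponding to a generator of C(K).\<close>
definition Dgen :: "bgen list \<Rightarrow> nat \<Rightarrow> gen \<Rightarrow> gen" where
  "Dgen w m g = (insert (length w) (fst g), insert (U0 w m) (lift w ` snd g))"

text \<open>f: the inclusion C(K) = D into C(K').\<close>
definition stab_f :: "bgen list \<Rightarrow> nat \<Rightarrow> chain \<Rightarrow> chain" where
  "stab_f w m z = (\<lambda>g'. \<Sum>g \<in> gens w m. z g * (if g' = Dgen w m g then 1 else 0))"

text \<open>The identification D = C(K) (forgetting U0), applied to a chain of K'.\<close>
definition iso_D :: "bgen list \<Rightarrow> nat \<Rightarrow> chain \<Rightarrow> chain" where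
  "iso_D w m z = (\<lambda>g. if g \<in> gens w m then z (Dgen w m g) else 0)"

definition projD :: "bgen list \<Rightarrow> nat \<Rightarrow> chain \<Rightarrow> chain" where
  "projD w m z = (\<lambda>g. if g \<in> gens (w @ [SigInv m]) (Suc m) \<and> length w \<in> fst g \<and> U0 w m \<in> snd g
                       then z g else 0)"

definition projF :: "bgen list \<Rightarrow> nat \<Rightarrow> chain \<Rightarrow> chain" where
  "projF w m z = (\<lambda>g. if g \<in> gens (w @ [SigInv m]) (Suc m) \<and> length w \<in> fst g \<and> U0 w m \<notin> snd g
                       then z g else 0)"

text \<open>The inverse of the cancelled arrows x \<mapsto> x \<otimes> x_-: the components of the differential
  of C(K') from E (generators with c 0-resolved) to F (c 1-resolved, U0 labeled x_-).\<close>
definition phi_inv :: "bgen list \<Rightarrow> nat \<Rightarrow> chain \<Rightarrow> chain" where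
  "phi_inv w m = (THE h.
      (\<forall>z g. h z g \<noteq> 0 \<longrightarrow> g \<in> gens (w @ [SigInv m]) (Suc m) \<and> length w \<notin> fst g) \<and>
      (\<forall>z. projF w m z = z \<longrightarrow> projF w m (khdiff (w @ [SigInv m]) (Suc m) (h z)) = z) \<and>
      (\<forall>z. h z = h (projF w m z)))"

text \<open>g: the homotopy inverse produced by the cancellation,
  g = pi_D - pi_D delta phi^{-1} pi_F, followed by D = C(K).\<close>
definition stab_g :: "bgen list \<Rightarrow> nat \<Rightarrow> chain \<Rightarrow> chain" where
  "stab_g w m y = iso_D w m (\<lambda>g. projD w m y g
       - projD w m (khdiff (w @ [SigInv m]) (Suc m) (phi_inv w m (projF w m y))) g)"

end

theory Submission
  imports Defs
begin


definition cls :: "bgen list \<Rightarrow> nat \<Rightarrow> nat set \<Rightarrow> nat\<times>nat \<Rightarrow> (nat\<times>nat) set" where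
 "cls w m v p = {q \<in> pts w m. (p,q) \<in> conn w m v}"

lemma circles_cls: "circles w m v = cls w m v ` pts w m"
  unfolding circles_def cls_def by auto

lemma conn_refl: "(p,p) \<in> conn w m v" unfolding conn_def by simp

lemma conn_sym: "(p,q) \<in> conn w m v \<Longrightarrow> (q,p) \<in> conn w m v"
proof -
  assume "(p,q) \<in> conn w m v"
  hence "(q,p) \<in> ((adj w m v \<union> (adj w m v)\<inverse>)\<inverse>)\<^sup>*" unfolding conn_def by (simp add: rtrancl_converseI)
  thus ?thesis unfolding conn_def by (simp add: converse_Un Un_commute)
qed

lemma conn_trans: "(p,q) \<in> conn w m v \<Longrightarrow> (q,r) \<in> conn w m v \<Longrightarrow> (p,r) \<in> conn w m v"
  unfolding conn_def by (rule rtrancl_trans)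

lemma adj_conn: "(p,q) \<in> adj w m v \<Longrightarrow> (p,q) \<in> conn w m v"
  unfolding conn_def by auto

lemma adj_conn': "(p,q) \<in> adj w m v \<Longrightarrow> (q,p) \<in> conn w m v"
  using adj_conn conn_sym by blast

lemma colpath: assumes "\<And>t. a \<le> t \<Longrightarrow> t < b \<Longrightarrow> ((t,j),(Suc t,j)) \<in> adj w m v" "a \<le> b"
  shows "((a,j),(b,j)) \<in> conn w m v"
  using assms proof (induction b)
  case 0 thus ?case by (simp add: conn_refl)
next
  case (Suc b) show ?case proof (cases "a = Suc b")
    case True thus ?thesis by (simp add: conn_refl)
  next
    case False
    hence "((a,j),(b,j)) \<in> conn w m v" using Suc by auto
    moreover have "((b,j),(Suc b,j)) \<in> conn w m v" using Suc.prems(1)[of b] False Suc.prems(2) adj_conn by auto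
    ultimately show ?thesis using conn_trans by blast
  qed
qed

lemma rtrancl_map_gen: assumes "(p,q) \<in> R\<^sup>*" "\<And>x y. (x,y) \<in> R \<Longrightarrow> (f x, f y) \<in> S\<^sup>*"
  shows "(f p, f q) \<in> S\<^sup>*"
  using assms(1) by (induction rule: rtrancl_induct) (auto intro: rtrancl_trans assms(2))

lemma conn_map: assumes "(p,q) \<in> conn w m v"
  "\<And>x y. (x,y) \<in> adj w m v \<Longrightarrow> (f x, f y) \<in> conn w' m' v'"
  shows "(f p, f q) \<in> conn w' m' v'"
proof -
  have "(f p, f q) \<in> (adj w' m' v' \<union> (adj w' m' v')\<inverse>)\<^sup>*"
  proof (rule rtrancl_map_gen[where R="adj w m v \<union> (adj w m v)\<inverse>" and f=f])
    show "(p, q) \<in> (adj w m v \<union> (adj w m v)\<inverse>)\<^sup>*" using assms(1) by (simp add: conn_def)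
  next
    fix x y assume "(x, y) \<in> adj w m v \<union> (adj w m v)\<inverse>"
    thus "(f x, f y) \<in> (adj w' m' v' \<union> (adj w' m' v')\<inverse>)\<^sup>*"
      using assms(2) conn_sym unfolding conn_def by blast
  qed
  thus ?thesis unfolding conn_def .
qed



lemma adj_vert: "k < length w \<Longrightarrow> 1 \<le> j \<Longrightarrow> j \<le> m \<Longrightarrow>
   (j \<noteq> bidx (w!k) \<and> j \<noteq> Suc (bidx (w!k))) \<or> vertical w v k \<Longrightarrow> ((k,j),(Suc k,j)) \<in> adj w m v"
  unfolding adj_def by (simp; blast)

lemma adj_clos: "1 \<le> j \<Longrightarrow> j \<le> m \<Longrightarrow> ((length w, j),(0,j)) \<in> adj w m v"
  unfolding adj_def by simp

lemma adj_h0: "k < length w \<Longrightarrow> \<not> vertical w v k \<Longrightarrow> ((k, bidx(w!k)),(k, Suc(bidx(w!k)))) \<in> adj w m v"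
  unfolding adj_def by simp

lemma adj_h1: "k < length w \<Longrightarrow> \<not> vertical w v k \<Longrightarrow> ((Suc k, bidx(w!k)),(Suc k, Suc(bidx(w!k)))) \<in> adj w m v"
  unfolding adj_def by simp


lemma bw_idx: "braid_word m w \<Longrightarrow> k < length w \<Longrightarrow> 1 \<le> bidx (w!k) \<and> bidx (w!k) < m"
  unfolding braid_word_def by auto

lemma adj_cases: "(p,q) \<in> adj w m v \<Longrightarrow>
 (\<exists>k j. p=(k,j) \<and> q=(Suc k,j) \<and> k<length w \<and> 1\<le>j \<and> j\<le>m \<and> j\<noteq>bidx(w!k) \<and> j\<noteq>Suc(bidx(w!k))) \<or>
 (\<exists>k j. p=(k,j) \<and> q=(Suc k,j) \<and> k<length w \<and> vertical w v k \<and> j \<in> {bidx(w!k), Suc(bidx(w!k))}) \<or>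
 (\<exists>k. p=(k,bidx(w!k)) \<and> q=(k,Suc(bidx(w!k))) \<and> k<length w \<and> \<not>vertical w v k) \<or>
 (\<exists>k. p=(Suc k,bidx(w!k)) \<and> q=(Suc k,Suc(bidx(w!k))) \<and> k<length w \<and> \<not>vertical w v k) \<or>
 (\<exists>j. p=(length w,j) \<and> q=(0,j) \<and> 1\<le>j \<and> j\<le>m)"
  unfolding adj_def by auto

lemma adj_pts: assumes "braid_word m w" "(p,q) \<in> adj w m v"
  shows "p \<in> pts w m \<and> q \<in> pts w m"
  using adj_cases[OF assms(2)] bw_idx[OF assms(1)] unfolding pts_def
  by (elim disjE exE conjE; force)

lemma conn_pts: assumes "braid_word m w" "(p,q) \<in> conn w m v" "p \<in> pts w m" shows "q \<in> pts w m"
  using assms(2,3) unfolding conn_def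
  by (induction rule: rtrancl_induct) (use adj_pts[OF assms(1)] in blast)+

lemma conn_npts: assumes "braid_word m w" "(p,q) \<in> conn w m v" "p \<notin> pts w m" shows "q = p"
  using assms(2,3) unfolding conn_def
  by (induction rule: rtrancl_induct) (use adj_pts[OF assms(1)] in blast)+


lemma vert_vo: "k < length w \<Longrightarrow> vertical w (vo w) k"
  unfolding vertical_def vo_def by simp

lemma adj_vo_snd: "(p,q) \<in> adj w m (vo w) \<Longrightarrow> snd p = snd q"
  using adj_cases[of p q w m "vo w"] vert_vo by auto

lemma conn_vo_snd: "(p,q) \<in> conn w m (vo w) \<Longrightarrow> snd p = snd q"
  unfolding conn_def by (induction rule: rtrancl_induct) (auto dest: adj_vo_snd)

lemma col_vo: "1 \<le> j \<Longrightarrow> j \<le> m \<Longrightarrow> a \<le> b \<Longrightarrow> b \<le> length w \<Longrightarrow> ((a,j),(b,j)) \<in> conn w m (vo w)"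
  by (rule colpath) (auto intro!: adj_vert vert_vo)

lemma cls_vo: assumes "(k,j) \<in> pts w m" shows "cls w m (vo w) (k,j) = strand_circle w j"
proof
  show "cls w m (vo w) (k,j) \<subseteq> strand_circle w j"
    unfolding cls_def strand_circle_def pts_def using conn_vo_snd by fastforce
next
  show "strand_circle w j \<subseteq> cls w m (vo w) (k,j)"
  proof
    fix q assume q: "q \<in> strand_circle w j"
    then obtain k' where q': "q = (k',j)" "k' \<le> length w" unfolding strand_circle_def by auto
    have j: "1 \<le> j" "j \<le> m" "k \<le> length w" using assms unfolding pts_def by auto
    have "((k,j),(0,j)) \<in> conn w m (vo w)" using col_vo[of j m 0 k w] j conn_sym by auto
    moreover have "((0,j),(k',j)) \<in> conn w m (vo w)" using col_vo[of j m 0 k' w] j q' by auto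
    ultimately have "((k,j),q) \<in> conn w m (vo w)" using conn_trans q' by blast
    moreover have "q \<in> pts w m" using q' j unfolding pts_def by auto
    ultimately show "q \<in> cls w m (vo w) (k,j)" unfolding cls_def by auto
  qed
qed

lemma circles_vo: "circles w m (vo w) = strand_circle w ` {1..m}"
proof -
  have "cls w m (vo w) ` pts w m = strand_circle w ` {1..m}"
  proof
    show "cls w m (vo w) ` pts w m \<subseteq> strand_circle w ` {1..m}"
      using cls_vo unfolding pts_def by fastforce
    show "strand_circle w ` {1..m} \<subseteq> cls w m (vo w) ` pts w m"
    proof
      fix C assume "C \<in> strand_circle w ` {1..m}"
      then obtain j where j: "j \<in> {1..m}" "C = strand_circle w j" by auto
      hence "(0,j) \<in> pts w m" unfolding pts_def by auto
      thus "C \<in> cls w m (vo w) ` pts w m" using cls_vo[of 0 j w m] j by force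
    qed
  qed
  thus ?thesis by (simp add: circles_cls)
qed

lemma strand_inj: "strand_circle w i = strand_circle w j \<longleftrightarrow> i = j"
  unfolding strand_circle_def by auto


abbreviation ws :: "bgen list \<Rightarrow> nat \<Rightarrow> bgen list" where "ws w m \<equiv> w @ [SigInv m]"

definition phi :: "nat \<Rightarrow> nat \<Rightarrow> bool \<Rightarrow> nat\<times>nat \<Rightarrow> nat\<times>nat" where
 "phi L m vt p = (if snd p = Suc m then (if vt then (0, Suc m) else (L, m)) else (min (fst p) L, snd p))"

lemma ws_nth: "k < length w \<Longrightarrow> ws w m ! k = w ! k" by (simp add: nth_append)
lemma ws_nthL: "ws w m ! length w = SigInv m" by simp

lemma bw_ws: "braid_word m w \<Longrightarrow> 1 \<le> m \<Longrightarrow> braid_word (Suc m) (ws w m)"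
  unfolding braid_word_def by auto

definition ext :: "bgen list \<Rightarrow> nat \<Rightarrow> (nat\<times>nat) set \<Rightarrow> (nat\<times>nat) set" where
  "ext w m C = lift w C \<union> (if (length w, m) \<in> C then U0 w m else {})"

locale stab =
  fixes w :: "bgen list" and m :: nat and v :: "nat set" and V :: "nat set"
  assumes bw: "braid_word m w" and m1: "1 \<le> m"
    and VV: "\<And>k. k < length w \<Longrightarrow> k \<in> V \<longleftrightarrow> k \<in> v"
begin

abbreviation "L \<equiv> length w"
abbreviation "vt \<equiv> L \<in> V"
abbreviation "ph \<equiv> phi L m vt"
abbreviation "w' \<equiv> ws w m"

lemma vert_eq: "k < L \<Longrightarrow> vertical w' V k = vertical w v k"
  unfolding vertical_def using VV by (simp add: nth_append)

lemma vert_L: "vertical w' V L = vt"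
  unfolding vertical_def by simp

lemma idx: "k < L \<Longrightarrow> 1 \<le> bidx (w!k) \<and> bidx (w!k) < m" using bw_idx[OF bw] .

lemma col_top: "a \<le> b \<Longrightarrow> b \<le> L \<Longrightarrow> ((a,Suc m),(b, Suc m)) \<in> conn w' (Suc m) V"
proof (rule colpath)
  fix t assume "a \<le> t" "t < b" "b \<le> L"
  hence t: "t < L" by simp
  show "((t, Suc m), Suc t, Suc m) \<in> adj w' (Suc m) V"
    using idx[OF t] t by (intro adj_vert) (auto simp: ws_nth[OF t])
qed

lemma LL: assumes "1 \<le> j" "j \<le> m" shows "((L,j),(Suc L,j)) \<in> conn w' (Suc m) V"
proof (cases "j < m \<or> vt")
  case True
  have "((L,j),(Suc L,j)) \<in> adj w' (Suc m) V"
    using adj_vert[of L w' j "Suc m" V] True assms vert_L by auto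
  thus ?thesis by (rule adj_conn)
next
  case False
  hence jm: "j = m" and nv: "\<not> vt" using assms by auto
  have 1: "((L,m),(L,Suc m)) \<in> conn w' (Suc m) V"
    using adj_h0[of L w' V "Suc m"] nv vert_L by (auto intro: adj_conn)
  have 2: "((L,Suc m),(0,Suc m)) \<in> conn w' (Suc m) V" using col_top[of 0 L] conn_sym by blast
  have 3: "((0,Suc m),(Suc L,Suc m)) \<in> conn w' (Suc m) V"
    using adj_clos[of "Suc m" "Suc m" w' V] by (auto intro: adj_conn')
  have 4: "((Suc L,Suc m),(Suc L, m)) \<in> conn w' (Suc m) V"
    using adj_h1[of L w' V "Suc m"] nv vert_L by (auto intro: adj_conn')
  show ?thesis using 1 2 3 4 jm conn_trans by blast
qed

lemma close_path: assumes "1 \<le> j" "j \<le> m" shows "((L,j),(0,j)) \<in> conn w' (Suc m) V"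
proof -
  have "((Suc L,j),(0,j)) \<in> adj w' (Suc m) V" using adj_clos[of j "Suc m" w' V] assms by simp
  thus ?thesis using LL[OF assms] adj_conn conn_trans by blast
qed

lemma fwd_edge: assumes "(x,y) \<in> adj w' (Suc m) V" shows "(ph x, ph y) \<in> conn w m v"
  using adj_cases[OF assms]
proof (elim disjE exE conjE)
  fix k j assume h: "x = (k,j)" "y = (Suc k, j)" "k < length w'" "1 \<le> j" "j \<le> Suc m"
    "j \<noteq> bidx (w'!k)" "j \<noteq> Suc (bidx (w'!k))"
  show ?thesis
  proof (cases "j = Suc m")
    case True thus ?thesis using h by (simp add: phi_def conn_refl)
  next
    case False
    show ?thesis
    proof (cases "k < L")
      case True
      hence "((k,j),(Suc k,j)) \<in> adj w m v" using h False by (intro adj_vert) (auto simp: nth_append)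
      thus ?thesis using h False True by (auto simp: phi_def intro: adj_conn)
    next
      case False': False
      hence "k = L" using h by simp
      thus ?thesis using h False by (simp add: phi_def conn_refl)
    qed
  qed
next
  fix k j assume h: "x = (k,j)" "y = (Suc k, j)" "k < length w'" "vertical w' V k"
    "j \<in> {bidx (w'!k), Suc (bidx (w'!k))}"
  show ?thesis
  proof (cases "k < L")
    case True
    note e = ws_nth[OF True, of m]
    hence "((k,j),(Suc k,j)) \<in> adj w m v" using h idx[OF True] vert_eq[OF True] True
      by (intro adj_vert) (auto simp: e)
    moreover have "j \<noteq> Suc m" using h idx[OF True] by (auto simp: e)
    ultimately show ?thesis using h True by (auto simp: phi_def intro: adj_conn)
  next
    case False
    hence "k = L" using h by simp
    thus ?thesis using h by (auto simp: phi_def conn_refl)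
  qed
next
  fix k assume h: "x = (k, bidx (w'!k))" "y = (k, Suc (bidx (w'!k)))" "k < length w'" "\<not> vertical w' V k"
  show ?thesis
  proof (cases "k < L")
    case True
    hence "((k,bidx (w!k)),(k,Suc (bidx (w!k)))) \<in> adj w m v" using h vert_eq[OF True]
      by (intro adj_h0) auto
    thus ?thesis using h True idx[OF True] by (auto simp: phi_def nth_append intro: adj_conn)
  next
    case False
    hence "k = L" using h by simp
    thus ?thesis using h vert_L by (auto simp: phi_def conn_refl)
  qed
next
  fix k assume h: "x = (Suc k, bidx (w'!k))" "y = (Suc k, Suc (bidx (w'!k)))" "k < length w'" "\<not> vertical w' V k"
  show ?thesis
  proof (cases "k < L")
    case True
    hence "((Suc k,bidx (w!k)),(Suc k,Suc (bidx (w!k)))) \<in> adj w m v" using h vert_eq[OF True]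
      by (intro adj_h1) auto
    thus ?thesis using h True idx[OF True] by (auto simp: phi_def nth_append intro: adj_conn)
  next
    case False
    hence "k = L" using h by simp
    thus ?thesis using h vert_L by (auto simp: phi_def conn_refl)
  qed
next
  fix j assume h: "x = (length w', j)" "y = (0,j)" "1 \<le> j" "j \<le> Suc m"
  show ?thesis
  proof (cases "j = Suc m")
    case True thus ?thesis using h by (simp add: phi_def conn_refl)
  next
    case False
    thus ?thesis using h adj_clos[of j m w v] by (auto simp: phi_def intro: adj_conn)
  qed
qed

lemma bwd_edge: assumes "(a,b) \<in> adj w m v" shows "(a,b) \<in> conn w' (Suc m) V"
  using adj_cases[OF assms]
proof (elim disjE exE conjE)
  fix k j assume h: "a = (k,j)" "b = (Suc k, j)" "k < L" "1 \<le> j" "j \<le> m"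
    "j \<noteq> bidx (w!k)" "j \<noteq> Suc (bidx (w!k))"
  have "((k,j),(Suc k,j)) \<in> adj w' (Suc m) V" using h by (intro adj_vert) (auto simp: nth_append)
  thus ?thesis using h by (auto intro: adj_conn)
next
  fix k j assume h: "a = (k,j)" "b = (Suc k, j)" "k < L" "vertical w v k"
    "j \<in> {bidx (w!k), Suc (bidx (w!k))}"
  have "((k,j),(Suc k,j)) \<in> adj w' (Suc m) V" using h idx[OF h(3)] vert_eq[OF h(3)]
    by (intro adj_vert) (auto simp: ws_nth[OF h(3)])
  thus ?thesis using h by (auto intro: adj_conn)
next
  fix k assume h: "a = (k, bidx (w!k))" "b = (k, Suc (bidx (w!k)))" "k < L" "\<not> vertical w v k"
  have "((k,bidx (w'!k)),(k,Suc (bidx (w'!k)))) \<in> adj w' (Suc m) V" using h vert_eq[OF h(3)]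
    by (intro adj_h0) auto
  thus ?thesis using h by (auto simp: ws_nth[OF h(3)] intro: adj_conn)
next
  fix k assume h: "a = (Suc k, bidx (w!k))" "b = (Suc k, Suc (bidx (w!k)))" "k < L" "\<not> vertical w v k"
  have "((Suc k,bidx (w'!k)),(Suc k,Suc (bidx (w'!k)))) \<in> adj w' (Suc m) V" using h vert_eq[OF h(3)]
    by (intro adj_h1) auto
  thus ?thesis using h by (auto simp: ws_nth[OF h(3)] intro: adj_conn)
next
  fix j assume h: "a = (L, j)" "b = (0,j)" "1 \<le> j" "j \<le> m"
  thus ?thesis using close_path by simp
qed

lemma bwd_conn: "(a,b) \<in> conn w m v \<Longrightarrow> (a,b) \<in> conn w' (Suc m) V"
  using conn_map[where f=id] bwd_edge by (metis id_apply)

lemma to_ph: assumes "p \<in> pts w' (Suc m)" shows "(p, ph p) \<in> conn w' (Suc m) V"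
proof -
  obtain k j where p: "p = (k,j)" "k \<le> Suc L" "1 \<le> j" "j \<le> Suc m" using assms unfolding pts_def by auto
  show ?thesis
  proof (cases "j = Suc m")
    case True
    have a: "((k,Suc m),(0,Suc m)) \<in> conn w' (Suc m) V"
    proof (cases "k = Suc L")
      case True thus ?thesis using adj_clos[of "Suc m" "Suc m" w' V] by (auto intro: adj_conn)
    next
      case False thus ?thesis using col_top[of 0 k] p conn_sym by auto
    qed
    show ?thesis
    proof (cases vt)
      case True thus ?thesis using a p \<open>j = Suc m\<close> by (simp add: phi_def)
    next
      case False
      have "((0,Suc m),(L,Suc m)) \<in> conn w' (Suc m) V" using col_top[of 0 L] by simp
      moreover have "((L,Suc m),(L,m)) \<in> conn w' (Suc m) V"
        using adj_h0[of L w' V "Suc m"] False vert_L by (auto intro: adj_conn')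
      ultimately have "((k,Suc m),(L,m)) \<in> conn w' (Suc m) V" using a conn_trans by blast
      thus ?thesis using p \<open>j = Suc m\<close> False by (simp add: phi_def)
    qed
  next
    case False
    show ?thesis
    proof (cases "k = Suc L")
      case True thus ?thesis using LL[of j] p False conn_sym by (simp add: phi_def)
    next
      case False': False
      thus ?thesis using p False by (simp add: phi_def conn_refl min_absorb1)
    qed
  qed
qed

lemma G1conn: assumes "p \<in> pts w' (Suc m)" "q \<in> pts w' (Suc m)"
  shows "(p,q) \<in> conn w' (Suc m) V \<longleftrightarrow> (ph p, ph q) \<in> conn w m v"
proof
  assume "(p,q) \<in> conn w' (Suc m) V"
  thus "(ph p, ph q) \<in> conn w m v" using conn_map fwd_edge by blast
next
  assume "(ph p, ph q) \<in> conn w m v"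
  hence "(ph p, ph q) \<in> conn w' (Suc m) V" by (rule bwd_conn)
  thus "(p,q) \<in> conn w' (Suc m) V" using to_ph[OF assms(1)] to_ph[OF assms(2)] conn_sym conn_trans by blast
qed


lemma pts_sub: "pts w m \<subseteq> pts w' (Suc m)" unfolding pts_def by auto

lemma ph_id: "a \<in> pts w m \<Longrightarrow> ph a = a" unfolding pts_def phi_def by auto

lemma ph_pts: "q \<in> pts w' (Suc m) \<Longrightarrow> snd q \<le> m \<or> \<not> vt \<Longrightarrow> ph q \<in> pts w m"
  using m1 unfolding pts_def phi_def by (auto simp: min_def)

lemma ph_npts: "q \<in> pts w' (Suc m) \<Longrightarrow> snd q = Suc m \<Longrightarrow> vt \<Longrightarrow> ph q = (0, Suc m) \<and> ph q \<notin> pts w m"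
  unfolding pts_def phi_def by auto

lemma pre_lift: "C \<subseteq> pts w m \<Longrightarrow> vt \<Longrightarrow> {q \<in> pts w' (Suc m). ph q \<in> C} = lift w C"
  unfolding pts_def phi_def lift_def by (auto simp: min_def split: if_splits)

lemma pre_ext: "C \<subseteq> pts w m \<Longrightarrow> \<not> vt \<Longrightarrow> {q \<in> pts w' (Suc m). ph q \<in> C} = ext w m C"
  unfolding pts_def phi_def lift_def ext_def U0_def by (auto simp: min_def split: if_splits)

lemma cls_sub: "cls w m v a \<subseteq> pts w m" unfolding cls_def by auto

lemma cls'_in: assumes "p \<in> pts w' (Suc m)" "ph p \<in> pts w m"
  shows "cls w' (Suc m) V p = {q \<in> pts w' (Suc m). ph q \<in> cls w m v (ph p)}"
proof (rule set_eqI)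
  fix q
  show "q \<in> cls w' (Suc m) V p \<longleftrightarrow> q \<in> {q \<in> pts w' (Suc m). ph q \<in> cls w m v (ph p)}"
  proof (cases "q \<in> pts w' (Suc m)")
    case True
    have "(p,q) \<in> conn w' (Suc m) V \<longleftrightarrow> (ph p, ph q) \<in> conn w m v" using G1conn assms(1) True by blast
    moreover have "(ph p, ph q) \<in> conn w m v \<Longrightarrow> ph q \<in> pts w m" using conn_pts[OF bw _ assms(2)] .
    ultimately show ?thesis using True unfolding cls_def by auto
  next
    case False thus ?thesis unfolding cls_def by auto
  qed
qed

lemma cls'_out: assumes "p \<in> pts w' (Suc m)" "snd p = Suc m" "vt"
  shows "cls w' (Suc m) V p = U0 w m"
proof -
  have "cls w' (Suc m) V p = {q \<in> pts w' (Suc m). ph q = ph p}"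
  proof (rule set_eqI)
    fix q
    show "q \<in> cls w' (Suc m) V p \<longleftrightarrow> q \<in> {q \<in> pts w' (Suc m). ph q = ph p}"
    proof (cases "q \<in> pts w' (Suc m)")
      case True
      have "(p,q) \<in> conn w' (Suc m) V \<longleftrightarrow> (ph p, ph q) \<in> conn w m v" using G1conn assms(1) True by blast
      moreover have "(ph p, ph q) \<in> conn w m v \<Longrightarrow> ph q = ph p"
        using conn_npts[OF bw _] ph_npts[OF assms] by blast
      ultimately show ?thesis using True conn_refl[of "ph p" w m v] unfolding cls_def by auto
    next
      case False thus ?thesis unfolding cls_def by auto
    qed
  qed
  also have "\<dots> = U0 w m"
    using assms ph_pts unfolding U0_def pts_def phi_def by (auto split: if_splits)
  finally show ?thesis .
qed


lemma circles_V: assumes "vt" shows "circles w' (Suc m) V = insert (U0 w m) (lift w ` circles w m v)"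
proof -
  have "cls w' (Suc m) V ` pts w' (Suc m) = insert (U0 w m) (lift w ` cls w m v ` pts w m)"
  proof
    show "cls w' (Suc m) V ` pts w' (Suc m) \<subseteq> insert (U0 w m) (lift w ` cls w m v ` pts w m)"
    proof
      fix C assume "C \<in> cls w' (Suc m) V ` pts w' (Suc m)"
      then obtain p where p: "p \<in> pts w' (Suc m)" "C = cls w' (Suc m) V p" by auto
      show "C \<in> insert (U0 w m) (lift w ` cls w m v ` pts w m)"
      proof (cases "snd p = Suc m")
        case True thus ?thesis using cls'_out[OF p(1) True assms] p by simp
      next
        case False
        hence "snd p \<le> m" using p unfolding pts_def by auto
        hence pp: "ph p \<in> pts w m" using ph_pts p by blast
        have "C = lift w (cls w m v (ph p))" using p cls'_in[OF p(1) pp] pre_lift[OF cls_sub assms] by simp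
        thus ?thesis using pp by blast
      qed
    qed
  next
    show "insert (U0 w m) (lift w ` cls w m v ` pts w m) \<subseteq> cls w' (Suc m) V ` pts w' (Suc m)"
    proof
      fix C assume C: "C \<in> insert (U0 w m) (lift w ` cls w m v ` pts w m)"
      show "C \<in> cls w' (Suc m) V ` pts w' (Suc m)"
      proof (cases "C = U0 w m")
        case True
        have "(0, Suc m) \<in> pts w' (Suc m)" unfolding pts_def by auto
        thus ?thesis using cls'_out[of "(0,Suc m)"] assms True by force
      next
        case False
        then obtain a where a: "a \<in> pts w m" "C = lift w (cls w m v a)" using C by auto
        have "cls w' (Suc m) V a = lift w (cls w m v a)"
          using cls'_in[of a] a pts_sub ph_id pre_lift[OF cls_sub assms] by auto
        thus ?thesis using a pts_sub by force
      qed
    qed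
  qed
  thus ?thesis by (simp add: circles_cls)
qed

lemma circles_H: assumes "\<not> vt" shows "circles w' (Suc m) V = ext w m ` circles w m v"
proof -
  have "cls w' (Suc m) V ` pts w' (Suc m) = ext w m ` cls w m v ` pts w m"
  proof
    show "cls w' (Suc m) V ` pts w' (Suc m) \<subseteq> ext w m ` cls w m v ` pts w m"
    proof
      fix C assume "C \<in> cls w' (Suc m) V ` pts w' (Suc m)"
      then obtain p where p: "p \<in> pts w' (Suc m)" "C = cls w' (Suc m) V p" by auto
      hence pp: "ph p \<in> pts w m" using ph_pts assms by blast
      have "C = ext w m (cls w m v (ph p))" using p cls'_in[OF p(1) pp] pre_ext[OF cls_sub assms] by simp
      thus "C \<in> ext w m ` cls w m v ` pts w m" using pp by blast
    qed
  next
    show "ext w m ` cls w m v ` pts w m \<subseteq> cls w' (Suc m) V ` pts w' (Suc m)"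
    proof
      fix C assume C: "C \<in> ext w m ` cls w m v ` pts w m"
      then obtain a where a: "a \<in> pts w m" "C = ext w m (cls w m v a)" by auto
      have "cls w' (Suc m) V a = ext w m (cls w m v a)"
        using cls'_in[of a] a pts_sub ph_id pre_ext[OF cls_sub assms] by auto
      thus "C \<in> cls w' (Suc m) V ` pts w' (Suc m)" using a pts_sub by force
    qed
  qed
  thus ?thesis by (simp add: circles_cls)
qed

end


lemma circles_F: assumes "braid_word m w" "1 \<le> m" "length w \<notin> v"
  shows "circles (ws w m) (Suc m) (insert (length w) v) = insert (U0 w m) (lift w ` circles w m v)"
proof -
  interpret stab w m v "insert (length w) v" using assms by unfold_locales auto
  show ?thesis using circles_V by simp
qed

lemma circles_E: assumes "braid_word m w" "1 \<le> m" "length w \<notin> v"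
  shows "circles (ws w m) (Suc m) v = ext w m ` circles w m v"
proof -
  interpret stab w m v v using assms by unfold_locales auto
  show ?thesis using circles_H assms by simp
qed

lemma circ_sub: "C \<in> circles w m v \<Longrightarrow> C \<subseteq> pts w m"
  unfolding circles_def by auto

lemma cls_self: "a \<in> pts w m \<Longrightarrow> a \<in> cls w m v a"
  unfolding cls_def using conn_refl by auto

lemma cls_eq: assumes "b \<in> cls w m v a" shows "cls w m v b = cls w m v a"
proof -
  have ab: "(a,b) \<in> conn w m v" using assms unfolding cls_def by auto
  show ?thesis unfolding cls_def using ab conn_sym conn_trans by blast
qed

lemma circ_ne: "C \<in> circles w m v \<Longrightarrow> C \<noteq> {}"
proof -
  assume "C \<in> circles w m v"
  then obtain b where "b \<in> pts w m" "C = cls w m v b" by (auto simp: circles_cls)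
  thus ?thesis using cls_self by blast
qed

lemma circ_mem: "C \<in> circles w m v \<Longrightarrow> a \<in> C \<Longrightarrow> C = cls w m v a"
proof -
  assume "C \<in> circles w m v" "a \<in> C"
  then obtain b where "b \<in> pts w m" "C = cls w m v b" "a \<in> cls w m v b" by (auto simp: circles_cls)
  thus ?thesis using cls_eq by metis
qed

lemma finite_pts: "finite (pts w m)" unfolding pts_def by auto

lemma finite_circles: "finite (circles w m v)"
proof -
  have "circles w m v \<subseteq> Pow (pts w m)" using circ_sub by blast
  thus ?thesis using finite_pts finite_subset by blast
qed

lemma finite_gens: "finite (gens w m)"
proof -
  have "gens w m \<subseteq> Pow {..<length w} \<times> Pow (Pow (pts w m))"
  proof
    fix g assume "g \<in> gens w m"
    then obtain v P where "g = (v,P)" "v \<subseteq> {..<length w}" "P \<subseteq> circles w m v" unfolding gens_def by auto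
    thus "g \<in> Pow {..<length w} \<times> Pow (Pow (pts w m))" using circ_sub by blast
  qed
  thus ?thesis using finite_pts finite_subset by blast
qed

lemma lift_low: "C \<subseteq> pts w m \<Longrightarrow> {p \<in> lift w C. fst p \<le> length w} = C"
  unfolding lift_def pts_def by auto

lemma lift_inj: "C \<subseteq> pts w m \<Longrightarrow> D \<subseteq> pts w m \<Longrightarrow> lift w C = lift w D \<Longrightarrow> C = D"
proof -
  assume a: "C \<subseteq> pts w m" "D \<subseteq> pts w m" "lift w C = lift w D"
  have "C = {p \<in> lift w C. fst p \<le> length w}" using lift_low[OF a(1)] by simp
  also have "\<dots> = {p \<in> lift w D. fst p \<le> length w}" using a(3) by simp
  also have "\<dots> = D" using lift_low[OF a(2)] by simp
  finally show ?thesis .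
qed

lemma ext_low: "C \<subseteq> pts w m \<Longrightarrow> {p \<in> ext w m C. fst p \<le> length w \<and> snd p \<le> m} = C"
  unfolding ext_def lift_def pts_def U0_def by auto

lemma ext_inj: "C \<subseteq> pts w m \<Longrightarrow> D \<subseteq> pts w m \<Longrightarrow> ext w m C = ext w m D \<Longrightarrow> C = D"
proof -
  assume a: "C \<subseteq> pts w m" "D \<subseteq> pts w m" "ext w m C = ext w m D"
  have "C = {p \<in> ext w m C. fst p \<le> length w \<and> snd p \<le> m}" using ext_low[OF a(1)] by simp
  also have "\<dots> = {p \<in> ext w m D. fst p \<le> length w \<and> snd p \<le> m}" using a(3) by simp
  also have "\<dots> = D" using ext_low[OF a(2)] by simp
  finally show ?thesis .
qed

lemma U0_top: "(0, Suc m) \<in> U0 w m" unfolding U0_def by auto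

lemma lift_top: "C \<subseteq> pts w m \<Longrightarrow> (0, Suc m) \<notin> lift w C" unfolding lift_def pts_def by auto

lemma lift_ne_U0: "C \<subseteq> pts w m \<Longrightarrow> lift w C \<noteq> U0 w m"
proof
  assume "C \<subseteq> pts w m" "lift w C = U0 w m"
  thus False using U0_top[of m w] lift_top[of C w m] by simp
qed

lemma ext_ne_U0: assumes "C \<subseteq> pts w m" "C \<noteq> {}" shows "ext w m C \<noteq> U0 w m"
proof
  assume a: "ext w m C = U0 w m"
  obtain p where p: "p \<in> C" using assms(2) by auto
  hence "p \<in> ext w m C" unfolding ext_def lift_def by simp
  hence "p \<in> U0 w m" using a by simp
  hence "snd p = Suc m" unfolding U0_def by (cases p) simp
  moreover have "snd p \<le> m" using p assms(1) unfolding pts_def by (cases p) auto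
  ultimately show False by simp
qed

lemma ext_nlm: "(length w, m) \<notin> C \<Longrightarrow> ext w m C = lift w C" unfolding ext_def by simp

lemma ext_lm_ne_lift: assumes "(length w, m) \<in> C" "D \<subseteq> pts w m" shows "ext w m C \<noteq> lift w D"
proof
  assume a: "ext w m C = lift w D"
  have "(0, Suc m) \<in> ext w m C" using assms(1) U0_top[of m w] unfolding ext_def by simp
  thus False using a lift_top[OF assms(2)] by simp
qed

lemma inj_lift: "inj_on (lift w) (Pow (pts w m))" by (rule inj_onI) (use lift_inj in blast)
lemma inj_ext: "inj_on (ext w m) (Pow (pts w m))" by (rule inj_onI) (use ext_inj in blast)


definition ec :: "(nat\<times>nat) set set \<Rightarrow> (nat\<times>nat) set set \<Rightarrow> (nat\<times>nat) set set \<Rightarrow> (nat\<times>nat) set set \<Rightarrow> int" where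
  "ec A B P P' =
    (let Old = A - B; N = B - A in
     if P \<inter> (A \<inter> B) \<noteq> P' \<inter> (A \<inter> B) then 0
     else if card Old = 2 \<and> card N = 1 then (if (N \<subseteq> P') = (Old \<subseteq> P) then 1 else 0)
     else if card Old = 1 \<and> card N = 2 then
       (if Old \<subseteq> P then
          (if card (N \<inter> P') = 1 then 1 else if card (N \<inter> P') = 2 then -1 else 0)
        else (if N \<inter> P' = {} then 1 else 0))
     else 0)"

lemma edge_coef_ec: "edge_coef w m g g' = ec (circles w m (fst g)) (circles w m (fst g')) (snd g) (snd g')"
  unfolding edge_coef_def ec_def Let_def by (rule refl)

lemma ec_split: assumes "X \<notin> R" "Y \<notin> R" "Z \<notin> R" "X \<noteq> Y" "X \<noteq> Z" "Y \<noteq> Z"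
  shows "ec (insert X R) (insert Y (insert Z R)) P P' =
    (if P \<inter> R \<noteq> P' \<inter> R then 0 else if X \<in> P then
       (if card ({Y,Z} \<inter> P') = 1 then 1 else if card ({Y,Z} \<inter> P') = 2 then -1 else 0)
     else (if {Y,Z} \<inter> P' = {} then 1 else 0))"
proof -
  have 1: "insert X R \<inter> insert Y (insert Z R) = R" using assms by auto
  have 2: "insert X R - insert Y (insert Z R) = {X}" using assms by auto
  have 3: "insert Y (insert Z R) - insert X R = {Y,Z}" using assms by auto
  have 4: "card {Y,Z} = 2" using assms by simp
  show ?thesis unfolding ec_def Let_def 1 2 3 using 4 by simp
qed

definition Egen :: "bgen list \<Rightarrow> nat \<Rightarrow> gen \<Rightarrow> gen" where
  "Egen w m g = (fst g, ext w m ` snd g)"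
definition Fgen :: "bgen list \<Rightarrow> nat \<Rightarrow> gen \<Rightarrow> gen" where
  "Fgen w m g = (insert (length w) (fst g), lift w ` snd g)"
definition C0 :: "bgen list \<Rightarrow> nat \<Rightarrow> nat set \<Rightarrow> (nat\<times>nat) set" where
  "C0 w m v = cls w m v (length w, m)"

lemma card_below: "v \<subseteq> {..<L} \<Longrightarrow> card {c' \<in> v. c' < L} = card v"
  by (metis (mono_tags, lifting) Collect_cong Collect_mem_eq lessThan_iff subset_iff)

lemma csum: assumes "v1 \<subseteq> {..<L}" "v \<subseteq> {..<L}"
  shows "(\<Sum>c\<in>{..<Suc L} - v1. if insert L v = insert c v1 then f c else (0::int)) = (if v = v1 then f L else 0)"
proof (cases "v = v1")
  case True
  have "(\<Sum>c\<in>{..<Suc L} - v1. if insert L v = insert c v1 then f c else 0)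
      = (\<Sum>c\<in>{..<Suc L} - v1. if c = L then f c else 0)"
  proof (rule sum.cong)
    fix c assume c: "c \<in> {..<Suc L} - v1"
    have "insert L v = insert c v1 \<longleftrightarrow> c = L"
    proof
      assume "insert L v = insert c v1"
      hence "c \<in> insert L v" by auto
      thus "c = L" using c True by auto
    qed (use True in auto)
    thus "(if insert L v = insert c v1 then f c else 0) = (if c = L then f c else 0)" by simp
  qed simp
  also have "\<dots> = f L" using assms(1) by (subst sum.delta) auto
  finally show ?thesis using True by simp
next
  case False
  have "\<And>c. insert L v \<noteq> insert c v1"
  proof
    fix c assume h: "insert L v = insert c v1"
    hence "L \<in> insert c v1" by auto
    hence "c = L" using assms(1) by auto
    hence "v = v1" using h assms by (metis insert_ident lessThan_iff less_irrefl subset_iff)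
    thus False using False by simp
  qed
  thus ?thesis using False by simp
qed

locale stabK =
  fixes w :: "bgen list" and m :: nat
  assumes bw: "braid_word m w" and m1: "1 \<le> m"
begin

abbreviation "L \<equiv> length w"
abbreviation "w' \<equiv> ws w m"

lemma LM: "(L, m) \<in> pts w m" using m1 unfolding pts_def by auto

lemma C0_circ: "C0 w m v \<in> circles w m v" unfolding C0_def circles_cls using LM by simp

lemma C0_iff: assumes "C \<in> circles w m v" shows "(L,m) \<in> C \<longleftrightarrow> C = C0 w m v"
proof
  assume "(L,m) \<in> C" thus "C = C0 w m v" unfolding C0_def using circ_mem[OF assms] by simp
next
  assume "C = C0 w m v" thus "(L,m) \<in> C" unfolding C0_def using cls_self[OF LM] by simp
qed

lemma gens_v: "(v,P) \<in> gens w m \<Longrightarrow> L \<notin> v \<and> v \<subseteq> {..<L}" unfolding gens_def by auto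

lemma cE: "(v,P) \<in> gens w m \<Longrightarrow> circles w' (Suc m) v = ext w m ` circles w m v"
  using circles_E[OF bw m1] gens_v by blast
lemma cF: "(v,P) \<in> gens w m \<Longrightarrow> circles w' (Suc m) (insert L v) = insert (U0 w m) (lift w ` circles w m v)"
  using circles_F[OF bw m1] gens_v by blast

lemma Egen_gens: assumes "(v,P) \<in> gens w m" shows "Egen w m (v,P) \<in> gens w' (Suc m)"
proof -
  have "v \<subseteq> {..<L}" "P \<subseteq> circles w m v" using assms unfolding gens_def by auto
  thus ?thesis using cE[OF assms] unfolding Egen_def gens_def by auto
qed

lemma Fgen_gens: assumes "(v,P) \<in> gens w m" shows "Fgen w m (v,P) \<in> gens w' (Suc m)"
proof -
  have "v \<subseteq> {..<L}" "P \<subseteq> circles w m v" using assms unfolding gens_def by auto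
  thus ?thesis using cF[OF assms] unfolding Fgen_def gens_def by auto
qed

lemma Dgen_gens: assumes "(v,P) \<in> gens w m" shows "Dgen w m (v,P) \<in> gens w' (Suc m)"
proof -
  have "v \<subseteq> {..<L}" "P \<subseteq> circles w m v" using assms unfolding gens_def by auto
  thus ?thesis using cF[OF assms] unfolding Dgen_def gens_def by auto
qed

lemma Egen_surj: assumes "g \<in> gens w' (Suc m)" "L \<notin> fst g" shows "\<exists>k \<in> gens w m. g = Egen w m k"
proof -
  obtain v P' where g: "g = (v,P')" "v \<subseteq> {..<Suc L}" "P' \<subseteq> circles w' (Suc m) v"
    using assms(1) unfolding gens_def by auto
  have v: "v \<subseteq> {..<L}" using g assms(2) by (auto simp: less_Suc_eq)
  have cc: "circles w' (Suc m) v = ext w m ` circles w m v" using circles_E[OF bw m1] assms(2) g by simp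
  define P where "P = {C \<in> circles w m v. ext w m C \<in> P'}"
  have "ext w m ` P = P'"
  proof
    show "ext w m ` P \<subseteq> P'" unfolding P_def by auto
    show "P' \<subseteq> ext w m ` P"
    proof
      fix x assume x: "x \<in> P'"
      then obtain C where "C \<in> circles w m v" "x = ext w m C" using g(3) cc by auto
      thus "x \<in> ext w m ` P" using x unfolding P_def by auto
    qed
  qed
  moreover have "(v,P) \<in> gens w m" using v unfolding gens_def P_def by auto
  ultimately have "(v,P) \<in> gens w m \<and> g = Egen w m (v,P)" using g unfolding Egen_def by simp
  thus ?thesis by blast
qed

lemma FD_surj: assumes "g \<in> gens w' (Suc m)" "L \<in> fst g"
  shows "\<exists>k \<in> gens w m. g = (if U0 w m \<in> snd g then Dgen w m k else Fgen w m k)"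
proof -
  obtain V P' where g: "g = (V,P')" "V \<subseteq> {..<Suc L}" "P' \<subseteq> circles w' (Suc m) V"
    using assms(1) unfolding gens_def by auto
  define v where "v = V - {L}"
  have v: "v \<subseteq> {..<L}" "V = insert L v" "L \<notin> v" using g assms(2) unfolding v_def by (auto simp: less_Suc_eq)
  have cc: "circles w' (Suc m) V = insert (U0 w m) (lift w ` circles w m v)"
    using circles_F[OF bw m1 v(3)] v by simp
  define P where "P = {C \<in> circles w m v. lift w C \<in> P'}"
  have kg: "(v,P) \<in> gens w m" using v unfolding gens_def P_def by auto
  have "P' - {U0 w m} = lift w ` P"
  proof
    show "P' - {U0 w m} \<subseteq> lift w ` P"
    proof
      fix x assume x: "x \<in> P' - {U0 w m}"
      then obtain C where "C \<in> circles w m v" "x = lift w C" using g(3) cc by auto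
      thus "x \<in> lift w ` P" using x unfolding P_def by auto
    qed
    show "lift w ` P \<subseteq> P' - {U0 w m}"
    proof
      fix x assume "x \<in> lift w ` P"
      then obtain C where C: "C \<in> P" "x = lift w C" by auto
      hence "C \<in> circles w m v" unfolding P_def by auto
      hence Cp: "C \<subseteq> pts w m" by (rule circ_sub)
      have "x \<noteq> U0 w m" using lift_ne_U0[OF Cp] C(2) by simp
      thus "x \<in> P' - {U0 w m}" using C unfolding P_def by auto
    qed
  qed
  note pd = this
  have "g = (if U0 w m \<in> snd g then Dgen w m (v,P) else Fgen w m (v,P))"
  proof (cases "U0 w m \<in> P'")
    case True
    hence "P' = insert (U0 w m) (P' - {U0 w m})" by auto
    hence "P' = insert (U0 w m) (lift w ` P)" using pd by simp
    thus ?thesis using True g v unfolding Dgen_def by simp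
  next
    case False
    hence "P' = P' - {U0 w m}" by auto
    hence "P' = lift w ` P" using pd by simp
    thus ?thesis using False g v unfolding Fgen_def by simp
  qed
  thus ?thesis using kg by blast
qed


lemma circs_pow: "circles w m v \<subseteq> Pow (pts w m)" using circ_sub by blast

lemma injL: "inj_on (lift w) (circles w m v)" using inj_lift circs_pow by (rule inj_on_subset)
lemma injE: "inj_on (ext w m) (circles w m v)" using inj_ext circs_pow by (rule inj_on_subset)

lemma C0_sub: "C0 w m v \<subseteq> pts w m" using C0_circ circ_sub by blast
lemma C0_lm: "(L,m) \<in> C0 w m v" using C0_iff C0_circ by blast
lemma C0_ne: "C0 w m v \<noteq> {}" using C0_lm by blast

lemma AE: "ext w m ` circles w m v = insert (ext w m (C0 w m v)) (lift w ` (circles w m v - {C0 w m v}))"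
proof -
  have e: "circles w m v = insert (C0 w m v) (circles w m v - {C0 w m v})" by (rule insert_Diff[symmetric, OF C0_circ])
  have "ext w m ` circles w m v = insert (ext w m (C0 w m v)) (ext w m ` (circles w m v - {C0 w m v}))"
    using arg_cong[of _ _ "image (ext w m)", OF e] by (simp only: image_insert)
  also have "ext w m ` (circles w m v - {C0 w m v}) = lift w ` (circles w m v - {C0 w m v})"
  proof (rule image_cong)
    fix C assume "C \<in> circles w m v - {C0 w m v}"
    hence "(L,m) \<notin> C" using C0_iff by blast
    thus "ext w m C = lift w C" by (rule ext_nlm)
  qed simp
  finally show ?thesis .
qed

lemma BF: "insert (U0 w m) (lift w ` circles w m v) = insert (U0 w m) (insert (lift w (C0 w m v)) (lift w ` (circles w m v - {C0 w m v})))"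
proof -
  have e: "circles w m v = insert (C0 w m v) (circles w m v - {C0 w m v})" by (rule insert_Diff[symmetric, OF C0_circ])
  have "lift w ` circles w m v = insert (lift w (C0 w m v)) (lift w ` (circles w m v - {C0 w m v}))"
    using arg_cong[of _ _ "image (lift w)", OF e] by (simp only: image_insert)
  thus ?thesis by simp
qed

lemma Rsub: "D \<in> lift w ` (circles w m v - {C0 w m v}) \<Longrightarrow> \<exists>C. C \<in> circles w m v \<and> C \<noteq> C0 w m v \<and> D = lift w C"
  by auto

lemma dis: "ext w m (C0 w m v) \<notin> lift w ` (circles w m v - {C0 w m v})"
  "U0 w m \<notin> lift w ` (circles w m v - {C0 w m v})"
  "lift w (C0 w m v) \<notin> lift w ` (circles w m v - {C0 w m v})"
  "ext w m (C0 w m v) \<noteq> U0 w m" "ext w m (C0 w m v) \<noteq> lift w (C0 w m v)" "U0 w m \<noteq> lift w (C0 w m v)"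
proof -
  show "ext w m (C0 w m v) \<notin> lift w ` (circles w m v - {C0 w m v})"
  proof
    assume "ext w m (C0 w m v) \<in> lift w ` (circles w m v - {C0 w m v})"
    then obtain C where "C \<in> circles w m v" "ext w m (C0 w m v) = lift w C" by auto
    thus False using ext_lm_ne_lift[OF C0_lm circ_sub] by blast
  qed
  show "U0 w m \<notin> lift w ` (circles w m v - {C0 w m v})"
  proof
    assume "U0 w m \<in> lift w ` (circles w m v - {C0 w m v})"
    then obtain C where "C \<in> circles w m v" "U0 w m = lift w C" by auto
    thus False using lift_ne_U0[OF circ_sub] by metis
  qed
  show "lift w (C0 w m v) \<notin> lift w ` (circles w m v - {C0 w m v})"
  proof
    assume "lift w (C0 w m v) \<in> lift w ` (circles w m v - {C0 w m v})"
    then obtain C where "C \<in> circles w m v" "C \<noteq> C0 w m v" "lift w (C0 w m v) = lift w C" by auto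
    thus False using lift_inj[OF C0_sub circ_sub] by metis
  qed
  show "ext w m (C0 w m v) \<noteq> U0 w m" using ext_ne_U0[OF C0_sub C0_ne] .
  show "ext w m (C0 w m v) \<noteq> lift w (C0 w m v)" using ext_lm_ne_lift[OF C0_lm C0_sub] .
  show "U0 w m \<noteq> lift w (C0 w m v)" using lift_ne_U0[OF C0_sub] by metis
qed


lemma ext_split: assumes "P1 \<subseteq> circles w m v"
  shows "ext w m ` P1 = lift w ` (P1 - {C0 w m v}) \<union> (if C0 w m v \<in> P1 then {ext w m (C0 w m v)} else {})"
proof -
  have "ext w m ` (P1 - {C0 w m v}) = lift w ` (P1 - {C0 w m v})"
  proof (rule image_cong)
    fix C assume "C \<in> P1 - {C0 w m v}"
    hence "(L,m) \<notin> C" using C0_iff assms by blast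
    thus "ext w m C = lift w C" by (rule ext_nlm)
  qed simp
  moreover have "ext w m ` P1 = ext w m ` (P1 - {C0 w m v}) \<union> (if C0 w m v \<in> P1 then {ext w m (C0 w m v)} else {})"
    by auto
  ultimately show ?thesis by simp
qed

lemma lift_split: "lift w ` P = lift w ` (P - {C0 w m v}) \<union> (if C0 w m v \<in> P then {lift w (C0 w m v)} else {})"
  by auto

lemma liftR_sub: "P \<subseteq> circles w m v \<Longrightarrow> lift w ` (P - {C0 w m v}) \<subseteq> lift w ` (circles w m v - {C0 w m v})"
  by auto

lemma ia: assumes "P1 \<subseteq> circles w m v"
  shows "ext w m ` P1 \<inter> lift w ` (circles w m v - {C0 w m v}) = lift w ` (P1 - {C0 w m v})"
  unfolding ext_split[OF assms] using liftR_sub[OF assms] dis(1)[of v] by auto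

lemma ib: assumes "P \<subseteq> circles w m v"
  shows "lift w ` P \<inter> lift w ` (circles w m v - {C0 w m v}) = lift w ` (P - {C0 w m v})"
proof -
  have e: "lift w ` P = lift w ` (P - {C0 w m v}) \<union> (if C0 w m v \<in> P then {lift w (C0 w m v)} else {})"
    by (rule lift_split)
  show ?thesis unfolding e using liftR_sub[OF assms] dis(3)[of v] by auto
qed

lemma ic: assumes "P \<subseteq> circles w m v"
  shows "insert (U0 w m) (lift w ` P) \<inter> lift w ` (circles w m v - {C0 w m v}) = lift w ` (P - {C0 w m v})"
  using ib[OF assms] dis(2)[of v] by auto

lemma id_: assumes "P1 \<subseteq> circles w m v" "P \<subseteq> circles w m v"
  shows "lift w ` (P1 - {C0 w m v}) = lift w ` (P - {C0 w m v}) \<longleftrightarrow> P1 - {C0 w m v} = P - {C0 w m v}"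
  using assms by (intro inj_on_image_eq_iff[OF injL]) auto

lemma ie: assumes "P1 \<subseteq> circles w m v" shows "ext w m (C0 w m v) \<in> ext w m ` P1 \<longleftrightarrow> C0 w m v \<in> P1"
  using inj_on_image_mem_iff[OF injE C0_circ assms] .

lemma ifF: assumes "P \<subseteq> circles w m v"
  shows "{U0 w m, lift w (C0 w m v)} \<inter> lift w ` P = (if C0 w m v \<in> P then {lift w (C0 w m v)} else {})"
proof -
  have "U0 w m \<notin> lift w ` P"
  proof
    assume "U0 w m \<in> lift w ` P"
    then obtain C where "C \<in> P" "U0 w m = lift w C" by auto
    hence "C \<in> circles w m v" "U0 w m = lift w C" using assms by auto
    thus False using lift_ne_U0[OF circ_sub[of C w m v]] by simp
  qed
  moreover have "lift w (C0 w m v) \<in> lift w ` P \<longleftrightarrow> C0 w m v \<in> P"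
    using inj_on_image_mem_iff[OF injL C0_circ assms] .
  ultimately show ?thesis by auto
qed

lemma eq_split: "P1 = P \<longleftrightarrow> (P1 - {c} = P - {c} \<and> (c \<in> P1 \<longleftrightarrow> c \<in> P))" by auto

lemma ecF: assumes "P1 \<subseteq> circles w m v" "P \<subseteq> circles w m v"
  shows "ec (ext w m ` circles w m v) (insert (U0 w m) (lift w ` circles w m v)) (ext w m ` P1) (lift w ` P)
     = (if P1 = P then 1 else 0)"
proof -
  let ?c = "C0 w m v"
  have c2: "card {U0 w m, lift w ?c} = 2" using dis(6) by simp
  have c1: "card {lift w ?c} = 1" by simp
  have "ec (ext w m ` circles w m v) (insert (U0 w m) (lift w ` circles w m v)) (ext w m ` P1) (lift w ` P)
     = (if lift w ` (P1 - {?c}) \<noteq> lift w ` (P - {?c}) then 0 else if ext w m ?c \<in> ext w m ` P1 then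
       (if card ({U0 w m, lift w ?c} \<inter> lift w ` P) = 1 then 1 else if card ({U0 w m, lift w ?c} \<inter> lift w ` P) = 2 then -1 else 0)
     else (if {U0 w m, lift w ?c} \<inter> lift w ` P = {} then 1 else 0))"
    apply (subst AE)
    apply (subst BF)
    apply (subst ec_split[OF dis(1-6)])
    apply (subst ia[OF assms(1)])
    apply (subst ib[OF assms(2)])
    apply (rule refl)
    done
  also have "\<dots> = (if P1 - {?c} \<noteq> P - {?c} then 0 else if ?c \<in> P1 then (if ?c \<in> P then 1 else 0)
      else (if ?c \<in> P then 0 else 1))"
    apply (simp only: id_[OF assms] ie[OF assms(1)] ifF[OF assms(2)])
    apply (cases "C0 w m v \<in> P")
    apply (simp_all only: if_True if_False c1 card.empty)
    apply simp_all
    done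
  also have "\<dots> = (if P1 = P then 1 else 0)"
  proof (cases "P1 - {?c} = P - {?c}")
    case True
    have "P1 = P \<longleftrightarrow> (?c \<in> P1 \<longleftrightarrow> ?c \<in> P)" using True by blast
    thus ?thesis using True by auto
  next
    case False
    hence "P1 \<noteq> P" by auto
    thus ?thesis using False by simp
  qed
  finally show ?thesis .
qed

lemma ecD: assumes "P1 \<subseteq> circles w m v" "P \<subseteq> circles w m v"
  shows "ec (ext w m ` circles w m v) (insert (U0 w m) (lift w ` circles w m v)) (ext w m ` P1) (insert (U0 w m) (lift w ` P))
     = (if P1 = insert (C0 w m v) P then (if C0 w m v \<in> P then -1 else 1) else 0)"
proof -
  let ?c = "C0 w m v"
  have c2: "card {U0 w m, lift w ?c} = 2" using dis(6) by simp
  have c1: "card {U0 w m} = 1" by simp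
  have f: "{U0 w m, lift w (C0 w m v)} \<inter> insert (U0 w m) (lift w ` P) =
    (if C0 w m v \<in> P then {U0 w m, lift w (C0 w m v)} else {U0 w m})"
    by (simp only: Int_insert_right ifF[OF assms(2)] insert_iff simp_thms if_True) (cases "C0 w m v \<in> P", simp_all)
  have "ec (ext w m ` circles w m v) (insert (U0 w m) (lift w ` circles w m v)) (ext w m ` P1) (insert (U0 w m) (lift w ` P))
     = (if lift w ` (P1 - {?c}) \<noteq> lift w ` (P - {?c}) then 0 else if ext w m ?c \<in> ext w m ` P1 then
       (if card ({U0 w m, lift w ?c} \<inter> insert (U0 w m) (lift w ` P)) = 1 then 1 else if card ({U0 w m, lift w ?c} \<inter> insert (U0 w m) (lift w ` P)) = 2 then -1 else 0)
     else (if {U0 w m, lift w ?c} \<inter> insert (U0 w m) (lift w ` P) = {} then 1 else 0))"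
    apply (subst AE)
    apply (subst BF)
    apply (subst ec_split[OF dis(1-6)])
    apply (subst ia[OF assms(1)])
    apply (subst ic[OF assms(2)])
    apply (rule refl)
    done
  also have "\<dots> = (if P1 - {?c} \<noteq> P - {?c} then 0 else if ?c \<in> P1 then (if ?c \<in> P then -1 else 1)
      else 0)"
    apply (simp only: id_[OF assms] ie[OF assms(1)] f)
    apply (cases "C0 w m v \<in> P")
    apply (simp_all only: if_True if_False c1 c2)
    apply simp_all
    done
  also have "\<dots> = (if P1 = insert ?c P then (if ?c \<in> P then -1 else 1) else 0)"
  proof (cases "P1 - {?c} = P - {?c} \<and> ?c \<in> P1")
    case True
    hence "P1 = insert ?c P" by blast
    thus ?thesis using True by simp
  next
    case False
    hence "P1 \<noteq> insert ?c P" by auto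
    thus ?thesis using False by simp
  qed
  finally show ?thesis .
qed

end


definition Einv :: "bgen list \<Rightarrow> nat \<Rightarrow> gen \<Rightarrow> gen" where
  "Einv w m g = (fst g, {C \<in> circles w m (fst g). ext w m C \<in> snd g})"

definition h0 :: "bgen list \<Rightarrow> nat \<Rightarrow> chain \<Rightarrow> chain" where
  "h0 w m z = (\<lambda>g. if g \<in> gens (ws w m) (Suc m) \<and> length w \<notin> fst g
      then (-1) ^ card (fst g) * z (Fgen w m (Einv w m g)) else 0)"

lemma neg1_sq: "((-1::int) ^ n) * (-1) ^ n = 1"
  by (metis power_add power_minus1_even mult_2 even_add)

context stabK begin

lemma Einv_Egen: assumes "(v,P) \<in> gens w m" shows "Einv w m (Egen w m (v,P)) = (v,P)"
proof -
  have P: "P \<subseteq> circles w m v" using assms unfolding gens_def by auto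
  have "{C \<in> circles w m v. ext w m C \<in> ext w m ` P} = P"
    using inj_on_image_mem_iff[OF injE _ P] P by auto
  thus ?thesis unfolding Einv_def Egen_def by simp
qed

lemma Egen_inj: assumes "k1 \<in> gens w m" "k \<in> gens w m" "Egen w m k1 = Egen w m k" shows "k1 = k"
proof -
  obtain v1 P1 v P where "k1 = (v1,P1)" "k = (v,P)" by (cases k1, cases k)
  thus ?thesis using Einv_Egen assms by metis
qed

lemma Egen_fst: "fst (Egen w m k) = fst k" unfolding Egen_def by simp
lemma Egen_fst2: "fst (Egen w m (v,P)) = v" unfolding Egen_def by simp
lemma Fgen_fst2: "fst (Fgen w m (v,P)) = insert L v" unfolding Fgen_def by simp
lemma Dgen_fst2: "fst (Dgen w m (v,P)) = insert L v" unfolding Dgen_def by simp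
lemma Fgen_U0: assumes "(v,P) \<in> gens w m" shows "U0 w m \<notin> snd (Fgen w m (v,P))"
proof
  assume "U0 w m \<in> snd (Fgen w m (v,P))"
  then obtain C where "C \<in> P" "U0 w m = lift w C" unfolding Fgen_def by auto
  moreover have "C \<in> P \<Longrightarrow> C \<subseteq> pts w m" using assms circ_sub[of C w m v] unfolding gens_def by auto
  ultimately show False using lift_ne_U0[of C w m] by simp
qed

lemma finite_gens': "finite (gens w' (Suc m))" by (rule finite_gens)

lemma DC_EF: assumes k1: "(v1,P1) \<in> gens w m" and k: "(v,P) \<in> gens w m"
  shows "dcoef w' (Suc m) (Egen w m (v1,P1)) (Fgen w m (v,P)) = (if (v1,P1) = (v,P) then (-1)^card v else 0)"
proof -
  have v1: "v1 \<subseteq> {..<L}" "P1 \<subseteq> circles w m v1" using k1 unfolding gens_def by auto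
  have v: "v \<subseteq> {..<L}" "P \<subseteq> circles w m v" using k unfolding gens_def by auto
  have "dcoef w' (Suc m) (Egen w m (v1,P1)) (Fgen w m (v,P)) =
    (\<Sum>c\<in>{..<Suc L} - v1. if insert L v = insert c v1 then
       (-1) ^ card {c' \<in> v1. c' < c} * edge_coef w' (Suc m) (Egen w m (v1,P1)) (Fgen w m (v,P)) else 0)"
    unfolding dcoef_def Egen_fst2 Fgen_fst2 using Egen_gens[OF k1] Fgen_gens[OF k] by simp
  also have "\<dots> = (if v = v1 then (-1) ^ card {c' \<in> v1. c' < L} * edge_coef w' (Suc m) (Egen w m (v1,P1)) (Fgen w m (v,P)) else 0)"
    by (rule csum[OF v1(1) v(1)])
  also have "\<dots> = (if (v1,P1) = (v,P) then (-1)^card v else 0)"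
  proof (cases "v = v1")
    case True
    have "edge_coef w' (Suc m) (Egen w m (v1,P1)) (Fgen w m (v,P)) = (if P1 = P then 1 else 0)"
      unfolding edge_coef_ec using cE[OF k] cF[OF k] ecF[of P1 v P] v1 v True by (simp add: Egen_def Fgen_def)
    thus ?thesis using True card_below[OF v1(1)] by simp
  next
    case False thus ?thesis by auto
  qed
  finally show ?thesis .
qed

lemma DC_ED: assumes k1: "(v1,P1) \<in> gens w m" and k: "(v,P) \<in> gens w m"
  shows "dcoef w' (Suc m) (Egen w m (v1,P1)) (Dgen w m (v,P)) =
     (if (v1,P1) = (v, insert (C0 w m v) P) then (-1)^card v * (if C0 w m v \<in> P then -1 else 1) else 0)"
proof -
  have v1: "v1 \<subseteq> {..<L}" "P1 \<subseteq> circles w m v1" using k1 unfolding gens_def by auto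
  have v: "v \<subseteq> {..<L}" "P \<subseteq> circles w m v" using k unfolding gens_def by auto
  have "dcoef w' (Suc m) (Egen w m (v1,P1)) (Dgen w m (v,P)) =
    (\<Sum>c\<in>{..<Suc L} - v1. if insert L v = insert c v1 then
       (-1) ^ card {c' \<in> v1. c' < c} * edge_coef w' (Suc m) (Egen w m (v1,P1)) (Dgen w m (v,P)) else 0)"
    unfolding dcoef_def Egen_fst2 Dgen_fst2 using Egen_gens[OF k1] Dgen_gens[OF k] by simp
  also have "\<dots> = (if v = v1 then (-1) ^ card {c' \<in> v1. c' < L} * edge_coef w' (Suc m) (Egen w m (v1,P1)) (Dgen w m (v,P)) else 0)"
    by (rule csum[OF v1(1) v(1)])
  also have "\<dots> = (if (v1,P1) = (v, insert (C0 w m v) P) then (-1)^card v * (if C0 w m v \<in> P then -1 else 1) else 0)"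
  proof (cases "v = v1")
    case True
    have "edge_coef w' (Suc m) (Egen w m (v1,P1)) (Dgen w m (v,P)) =
        (if P1 = insert (C0 w m v) P then (if C0 w m v \<in> P then -1 else 1) else 0)"
      unfolding edge_coef_ec using cE[OF k] cF[OF k] ecD[of P1 v P] v1 v True by (simp add: Egen_def Dgen_def)
    thus ?thesis using True card_below[OF v1(1)] by simp
  next
    case False thus ?thesis by auto
  qed
  finally show ?thesis .
qed

definition Esupp :: "chain \<Rightarrow> bool" where
  "Esupp d \<longleftrightarrow> (\<forall>g. d g \<noteq> 0 \<longrightarrow> g \<in> gens w' (Suc m) \<and> L \<notin> fst g)"

lemma KEY_gen: assumes d: "Esupp d" and a: "a \<in> gens w' (Suc m)"
  and dc: "\<And>k1. k1 \<in> gens w m \<Longrightarrow> dcoef w' (Suc m) (Egen w m k1) a = (if k1 = k then c else 0)"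
  and k: "k \<in> gens w m"
  shows "khdiff w' (Suc m) d a = d (Egen w m k) * c"
proof -
  have "khdiff w' (Suc m) d a = (\<Sum>g\<in>gens w' (Suc m). if g = Egen w m k then d g * c else 0)"
    unfolding khdiff_def
  proof (rule sum.cong)
    fix g assume g: "g \<in> gens w' (Suc m)"
    show "d g * dcoef w' (Suc m) g a = (if g = Egen w m k then d g * c else 0)"
    proof (cases "d g = 0")
      case True thus ?thesis by auto
    next
      case False
      hence "L \<notin> fst g" using d unfolding Esupp_def by blast
      then obtain k1 where k1: "k1 \<in> gens w m" "g = Egen w m k1" using Egen_surj g by blast
      have "g = Egen w m k \<longleftrightarrow> k1 = k"
      proof
        assume "g = Egen w m k" thus "k1 = k" using Egen_inj[OF k1(1) k] k1(2) by simp
      qed (use k1 in simp)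
      thus ?thesis using dc[OF k1(1)] k1 by simp
    qed
  qed simp
  also have "\<dots> = d (Egen w m k) * c" using finite_gens' Egen_gens k
    by (cases k) (simp add: sum.delta)
  finally show ?thesis .
qed

lemma KEY_F: assumes "Esupp d" "(v,P) \<in> gens w m"
  shows "khdiff w' (Suc m) d (Fgen w m (v,P)) = (-1)^card v * d (Egen w m (v,P))"
proof -
  have "khdiff w' (Suc m) d (Fgen w m (v,P)) = d (Egen w m (v,P)) * (-1)^card v"
    apply (rule KEY_gen[OF assms(1) Fgen_gens[OF assms(2)] _ assms(2)])
    subgoal for k1 using DC_EF[of "fst k1" "snd k1" v P] assms(2) by (cases k1) simp
    done
  thus ?thesis by simp
qed

lemma ins_gens: assumes "(v,P) \<in> gens w m" shows "(v, insert (C0 w m v) P) \<in> gens w m"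
  using assms C0_circ unfolding gens_def by auto

lemma KEY_D: assumes "Esupp d" "(v,P) \<in> gens w m"
  shows "khdiff w' (Suc m) d (Dgen w m (v,P)) =
     (-1)^card v * (if C0 w m v \<in> P then -1 else 1) * d (Egen w m (v, insert (C0 w m v) P))"
proof -
  have "khdiff w' (Suc m) d (Dgen w m (v,P)) = d (Egen w m (v, insert (C0 w m v) P)) * ((-1)^card v * (if C0 w m v \<in> P then -1 else 1))"
    apply (rule KEY_gen[OF assms(1) Dgen_gens[OF assms(2)] _ ins_gens[OF assms(2)]])
    subgoal for k1 using DC_ED[of "fst k1" "snd k1" v P] assms(2) by (cases k1) simp
    done
  thus ?thesis by simp
qed

end


context stabK begin

lemma h0_Esupp: "Esupp (h0 w m z)" unfolding Esupp_def h0_def by auto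

lemma Einv_ok: assumes "g \<in> gens w' (Suc m)" "L \<notin> fst g"
  shows "Einv w m g \<in> gens w m \<and> Egen w m (Einv w m g) = g"
proof -
  obtain k where k: "k \<in> gens w m" "g = Egen w m k" using Egen_surj assms by blast
  obtain v P where "k = (v,P)" by (cases k)
  thus ?thesis using k Einv_Egen by simp
qed

lemma projF_F: "k \<in> gens w m \<Longrightarrow> projF w m x (Fgen w m k) = x (Fgen w m k)"
  unfolding projF_def using Fgen_gens Fgen_U0 by (cases k) (auto simp: Fgen_fst2)

lemma projD_D: "k \<in> gens w m \<Longrightarrow> projD w m x (Dgen w m k) = x (Dgen w m k)"
  unfolding projD_def using Dgen_gens by (cases k) (auto simp: Dgen_fst2 Dgen_def)

lemma h0_E: "k \<in> gens w m \<Longrightarrow> h0 w m z (Egen w m k) = (-1)^card (fst k) * z (Fgen w m k)"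
  unfolding h0_def using Egen_gens Einv_Egen gens_v by (cases k) (auto simp: Egen_fst2)

lemma phi_inv_eq: "phi_inv w m = h0 w m"
  unfolding phi_inv_def
proof (rule the_equality)
  show "(\<forall>z g. h0 w m z g \<noteq> 0 \<longrightarrow> g \<in> gens w' (Suc m) \<and> L \<notin> fst g) \<and>
    (\<forall>z. projF w m z = z \<longrightarrow> projF w m (khdiff w' (Suc m) (h0 w m z)) = z) \<and>
    (\<forall>z. h0 w m z = h0 w m (projF w m z))"
  proof (intro conjI allI impI)
    fix z g assume "h0 w m z g \<noteq> 0" thus "g \<in> gens w' (Suc m)" using h0_Esupp unfolding Esupp_def by blast
  next
    fix z g assume "h0 w m z g \<noteq> 0" thus "L \<notin> fst g" using h0_Esupp unfolding Esupp_def by blast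
  next
    fix z :: chain assume zF: "projF w m z = z"
    show "projF w m (khdiff w' (Suc m) (h0 w m z)) = z"
    proof
      fix g
      show "projF w m (khdiff w' (Suc m) (h0 w m z)) g = z g"
      proof (cases "g \<in> gens w' (Suc m) \<and> L \<in> fst g \<and> U0 w m \<notin> snd g")
        case True
        then obtain k where k: "k \<in> gens w m" "g = Fgen w m k" using FD_surj by fastforce
        obtain v P where vP: "k = (v,P)" by (cases k)
        have "khdiff w' (Suc m) (h0 w m z) g = (-1)^card v * h0 w m z (Egen w m (v,P))"
          using KEY_F[OF h0_Esupp] k vP by simp
        also have "\<dots> = z g" using h0_E[of "(v,P)"] k vP neg1_sq by (simp add: mult.assoc[symmetric])
        finally show ?thesis using True unfolding projF_def by simp
      next
        case False
        hence "projF w m z g = 0" unfolding projF_def by auto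
        hence "z g = 0" using zF by simp
        moreover have "projF w m (khdiff w' (Suc m) (h0 w m z)) g = 0" using False unfolding projF_def by auto
        ultimately show ?thesis by simp
      qed
    qed
  next
    fix z :: chain
    show "h0 w m z = h0 w m (projF w m z)"
    proof
      fix g
      show "h0 w m z g = h0 w m (projF w m z) g"
      proof (cases "g \<in> gens w' (Suc m) \<and> L \<notin> fst g")
        case True
        hence "Einv w m g \<in> gens w m" using Einv_ok by blast
        note pf = projF_F[OF this, of z]
        show ?thesis unfolding h0_def using pf True by simp
      next
        case False
        have "h0 w m z g = 0" "h0 w m (projF w m z) g = 0" using False unfolding h0_def by auto
        thus ?thesis by simp
      qed
    qed
  qed
next
  fix h assume H: "(\<forall>z g. h z g \<noteq> 0 \<longrightarrow> g \<in> gens w' (Suc m) \<and> L \<notin> fst g) \<and>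
    (\<forall>z. projF w m z = z \<longrightarrow> projF w m (khdiff w' (Suc m) (h z)) = z) \<and>
    (\<forall>z. h z = h (projF w m z))"
  show "h = h0 w m"
  proof (rule ext, rule ext)
    fix z g
    let ?z' = "projF w m z"
    have z'F: "projF w m ?z' = ?z'" unfolding projF_def by auto
    have ES: "Esupp (h ?z')" using H unfolding Esupp_def by blast
    have hz: "h z = h ?z'" using H by blast
    show "h z g = h0 w m z g"
    proof (cases "g \<in> gens w' (Suc m) \<and> L \<notin> fst g")
      case True
      then obtain k where k: "k \<in> gens w m" "g = Egen w m k" using Egen_surj by blast
      obtain v P where vP: "k = (v,P)" by (cases k)
      have "projF w m (khdiff w' (Suc m) (h ?z')) = ?z'" using H z'F by blast
      hence "projF w m (khdiff w' (Suc m) (h ?z')) (Fgen w m k) = ?z' (Fgen w m k)" by simp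
      hence "khdiff w' (Suc m) (h ?z') (Fgen w m k) = z (Fgen w m k)" using projF_F[OF k(1)] by simp
      hence "(-1)^card v * h ?z' (Egen w m k) = z (Fgen w m k)" using KEY_F[OF ES] k vP by simp
      hence "(-1)^card v * ((-1)^card v * h ?z' (Egen w m k)) = (-1)^card v * z (Fgen w m k)" by simp
      hence "h ?z' (Egen w m k) = (-1)^card v * z (Fgen w m k)" using neg1_sq by (simp add: mult.assoc[symmetric])
      thus ?thesis using hz k h0_E[OF k(1)] vP by simp
    next
      case False
      hence "h ?z' g = 0" using ES unfolding Esupp_def by blast
      moreover have "h0 w m z g = 0" using False unfolding h0_def by auto
      ultimately show ?thesis using hz by simp
    qed
  qed
qed

lemma stab_g_in: assumes "(v,P) \<in> gens w m"
  shows "stab_g w m y (v,P) = y (Dgen w m (v,P)) - (if C0 w m v \<in> P then -1 else 1) * y (Fgen w m (v, insert (C0 w m v) P))"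
proof -
  have ig: "(v, insert (C0 w m v) P) \<in> gens w m" by (rule ins_gens[OF assms])
  have "projD w m (khdiff w' (Suc m) (h0 w m (projF w m y))) (Dgen w m (v,P))
     = (-1)^card v * (if C0 w m v \<in> P then -1 else 1) * h0 w m (projF w m y) (Egen w m (v, insert (C0 w m v) P))"
    using projD_D[OF assms] KEY_D[OF h0_Esupp assms] by simp
  also have "\<dots> = (-1)^card v * (if C0 w m v \<in> P then -1 else 1) * ((-1)^card v * y (Fgen w m (v, insert (C0 w m v) P)))"
    using h0_E[OF ig] projF_F[OF ig] by simp
  also have "\<dots> = (if C0 w m v \<in> P then -1 else 1) * y (Fgen w m (v, insert (C0 w m v) P))"
    using neg1_sq[of "card v"] by (simp add: algebra_simps)
  finally show ?thesis unfolding stab_g_def iso_D_def phi_inv_eq using assms projD_D[OF assms] by simp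
qed

lemma stab_g_out: "g \<notin> gens w m \<Longrightarrow> stab_g w m y g = 0"
  unfolding stab_g_def iso_D_def by simp

end


lemma vo_ws: "vo (ws w m) = insert (length w) (vo w)"
  unfolding vo_def by (auto simp: nth_append less_Suc_eq)

lemma inj_on_image_subset_iff': assumes "inj_on f C" "A \<subseteq> C" "B \<subseteq> C"
  shows "f ` A \<subseteq> f ` B \<longleftrightarrow> A \<subseteq> B"
proof
  assume h: "f ` A \<subseteq> f ` B"
  show "A \<subseteq> B"
  proof
    fix x assume x: "x \<in> A"
    then obtain y where y: "y \<in> B" "f x = f y" using h by auto
    have "x = y" using inj_onD[OF assms(1) y(2)] x y assms(2,3) by auto
    thus "x \<in> B" using y by simp
  qed
qed auto

lemma vo_sub: "vo w \<subseteq> {..<length w}" unfolding vo_def by auto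

lemma strand_lift: "strand_circle (ws w m) j = lift w (strand_circle w j)"
  unfolding strand_circle_def lift_def by (auto simp: le_Suc_eq)

lemma U0_strand: "U0 w m = strand_circle (ws w m) (Suc m)"
  unfolding U0_def strand_circle_def by simp

lemma bar_ws: "bar_circ (ws w m) (Suc m) b = lift w ` bar_circ w m b \<union> (if even (Suc m) = b then {U0 w m} else {})"
  unfolding bar_circ_def U0_strand strand_lift by (auto simp: le_Suc_eq)

lemma bar_sub: "bar_circ w m b \<subseteq> strand_circle w ` {1..m}"
  unfolding bar_circ_def by auto

context stabK begin

lemma bar_circ: "bar_circ w m b \<subseteq> circles w m (vo w)" using bar_sub circles_vo by metis

lemma vo_notL: "L \<notin> vo w" unfolding vo_def by simp

lemma psi_supp: "psi w m b g \<noteq> 0 \<Longrightarrow> g \<in> gens w m"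
proof -
  assume h: "psi w m b g \<noteq> 0"
  obtain v P where g: "g = (v,P)" by (cases g)
  have "v = vo w" "P \<subseteq> bar_circ w m b" using h g unfolding psi_def by (auto split: if_splits)
  thus ?thesis using g vo_sub bar_circ[of b] unfolding gens_def by auto
qed

lemma C0_vo: "C0 w m (vo w) = strand_circle w m"
  unfolding C0_def using cls_vo[OF LM] by simp

lemma lift_in_bar: assumes "P \<subseteq> circles w m (vo w)"
  shows "lift w ` P \<subseteq> bar_circ w' (Suc m) b \<longleftrightarrow> P \<subseteq> bar_circ w m b"
proof -
  have U: "U0 w m \<notin> lift w ` P"
  proof
    assume "U0 w m \<in> lift w ` P"
    then obtain C where "C \<in> P" "U0 w m = lift w C" by auto
    hence "C \<in> circles w m (vo w)" "U0 w m = lift w C" using assms by auto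
    thus False using lift_ne_U0[OF circ_sub[of C w m "vo w"]] by simp
  qed
  have "lift w ` P \<subseteq> bar_circ w' (Suc m) b \<longleftrightarrow> lift w ` P \<subseteq> lift w ` bar_circ w m b"
    unfolding bar_ws using U by auto
  also have "\<dots> \<longleftrightarrow> P \<subseteq> bar_circ w m b"
    using inj_on_image_subset_iff'[OF injL[of "vo w"] assms bar_circ[of b]] .
  finally show ?thesis .
qed

lemma U0_in_bar: "U0 w m \<in> bar_circ w' (Suc m) b \<longleftrightarrow> even (Suc m) = b"
proof -
  have "U0 w m \<notin> lift w ` bar_circ w m b"
  proof
    assume "U0 w m \<in> lift w ` bar_circ w m b"
    then obtain C where "C \<in> bar_circ w m b" "U0 w m = lift w C" by auto
    hence "C \<in> circles w m (vo w)" "U0 w m = lift w C" using bar_circ by auto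
    thus False using lift_ne_U0[OF circ_sub[of C w m "vo w"]] by simp
  qed
  thus ?thesis unfolding bar_ws by auto
qed

lemma card_lift: "P \<subseteq> circles w m v \<Longrightarrow> card (lift w ` P) = card P"
  using card_image inj_on_subset[OF injL] by blast

lemma psiK'_F: assumes "(v,P) \<in> gens w m"
  shows "psi w' (Suc m) b (Fgen w m (v,P)) = psi w m b (v,P)"
proof (cases "v = vo w")
  case True
  have P: "P \<subseteq> circles w m (vo w)" using assms True unfolding gens_def by auto
  show ?thesis unfolding psi_def Fgen_def using True lift_in_bar[OF P] card_lift[OF P] vo_ws by simp
next
  case False
  have "insert L v \<noteq> insert L (vo w)" using False vo_notL gens_v[OF assms]
    by (metis insert_ident)
  thus ?thesis unfolding psi_def Fgen_def using False vo_ws by simp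
qed

lemma psiK'_D: assumes "(v,P) \<in> gens w m"
  shows "psi w' (Suc m) b (Dgen w m (v,P)) = (if even (Suc m) = b then - psi w m b (v,P) else 0)"
proof (cases "v = vo w")
  case True
  have P: "P \<subseteq> circles w m (vo w)" using assms True unfolding gens_def by auto
  have U: "U0 w m \<notin> lift w ` P"
  proof
    assume "U0 w m \<in> lift w ` P"
    then obtain C where "C \<in> P" "U0 w m = lift w C" by auto
    hence "C \<in> circles w m (vo w)" "U0 w m = lift w C" using P by auto
    thus False using lift_ne_U0[OF circ_sub[of C w m "vo w"]] by simp
  qed
  have fin: "finite (lift w ` P)" using P finite_circles finite_subset by blast
  have c: "card (insert (U0 w m) (lift w ` P)) = Suc (card P)" using U fin card_lift[OF P] by simp
  show ?thesis unfolding psi_def Dgen_def using True lift_in_bar[OF P] U0_in_bar c vo_ws by auto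
next
  case False
  have "insert L v \<noteq> insert L (vo w)" using False vo_notL gens_v[OF assms]
    by (metis insert_ident)
  thus ?thesis unfolding psi_def Dgen_def using False vo_ws by simp
qed

lemma part1: "\<exists>\<epsilon> \<in> {1, -1::int}. stab_g w m (psi w' (Suc m) b) = (\<lambda>g. \<epsilon> * psi w m b g + khdiff w m (\<lambda>_. 0) g)"
proof -
  define \<epsilon> :: int where "\<epsilon> = (if even m = b then 1 else -1)"
  have "stab_g w m (psi w' (Suc m) b) g = \<epsilon> * psi w m b g" for g
  proof (cases "g \<in> gens w m")
    case False
    have "psi w m b g = 0" using psi_supp False by blast
    thus ?thesis using stab_g_out[OF False] by simp
  next
    case True
    obtain v P where g: "g = (v,P)" by (cases g)
    have gg: "(v,P) \<in> gens w m" using True g by simp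
    have ig: "(v, insert (C0 w m v) P) \<in> gens w m" using ins_gens[OF gg] .
    have "stab_g w m (psi w' (Suc m) b) (v,P) =
      (if even (Suc m) = b then - psi w m b (v,P) else 0) - (if C0 w m v \<in> P then -1 else 1) * psi w m b (v, insert (C0 w m v) P)"
      using stab_g_in[OF gg] psiK'_D[OF gg] psiK'_F[OF ig] by simp
    also have "\<dots> = \<epsilon> * psi w m b (v,P)"
    proof (cases "v = vo w")
      case False thus ?thesis unfolding psi_def by simp
    next
      case vv: True
      have P: "P \<subseteq> circles w m (vo w)" using gg vv unfolding gens_def by auto
      have fin: "finite P" using P finite_circles finite_subset by blast
      have C0: "C0 w m v = strand_circle w m" using C0_vo vv by simp
      have sb: "strand_circle w m \<in> bar_circ w m b \<longleftrightarrow> even m = b"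
        unfolding bar_circ_def using m1 strand_inj by auto
      show ?thesis
      proof (cases "even m = b")
        case True
        hence "even (Suc m) \<noteq> b" by auto
        moreover have "(if C0 w m v \<in> P then -1 else 1) * psi w m b (v, insert (C0 w m v) P) = - psi w m b (v,P)"
          unfolding psi_def C0 using True sb fin vv by (auto simp: card_insert_if)
        ultimately show ?thesis unfolding \<epsilon>_def using True by simp
      next
        case False
        hence "even (Suc m) = b" by auto
        moreover have "psi w m b (v, insert (C0 w m v) P) = 0"
          unfolding psi_def C0 using False sb by auto
        ultimately show ?thesis unfolding \<epsilon>_def using False by simp
      qed
    qed
    finally show ?thesis using g by simp
  qed
  moreover have "khdiff w m (\<lambda>_. 0) g = 0" for g unfolding khdiff_def by simp
  ultimately have "stab_g w m (psi w' (Suc m) b) = (\<lambda>g. \<epsilon> * psi w m b g + khdiff w m (\<lambda>_. 0) g)" by auto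
  moreover have "\<epsilon> \<in> {1, -1}" unfolding \<epsilon>_def by simp
  ultimately show ?thesis by blast
qed

end


lemma ec_drop: assumes "X \<notin> B" "Y \<in> A - B" "Y \<notin> Q"
  shows "ec A B Q Q' = ec A B (Q - {X}) Q'"
proof -
  have h1: "Q \<inter> (A \<inter> B) = (Q - {X}) \<inter> (A \<inter> B)" using assms(1) by auto
  have h2: "\<not> (A - B \<subseteq> Q)" "\<not> (A - B \<subseteq> Q - {X})" using assms(2,3) by auto
  show ?thesis unfolding ec_def Let_def h1 using h2 by simp
qed

lemma cancel: assumes "finite T" "X \<in> T" "X \<notin> B" "Y \<in> A - B" "Y \<notin> T"
  shows "(\<Sum>Q\<in>Pow T. (-1::int)^card Q * ec A B Q Q') = 0"
proof -
  define T0 where "T0 = T - {X}"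
  have T: "T = insert X T0" "X \<notin> T0" "finite T0" using assms unfolding T0_def by auto
  have disj: "Pow T0 \<inter> insert X ` Pow T0 = {}" using T(2) by auto
  have inj: "inj_on (insert X) (Pow T0)" using T(2) by (auto intro!: inj_onI)
  have "(\<Sum>Q\<in>Pow T. (-1::int)^card Q * ec A B Q Q') =
      (\<Sum>Q\<in>Pow T0. (-1::int)^card Q * ec A B Q Q') + (\<Sum>Q\<in>insert X ` Pow T0. (-1::int)^card Q * ec A B Q Q')"
    unfolding T(1) Pow_insert using T(3) disj by (intro sum.union_disjoint) auto
  also have "(\<Sum>Q\<in>insert X ` Pow T0. (-1::int)^card Q * ec A B Q Q') = (\<Sum>Q\<in>Pow T0. (-1::int)^card (insert X Q) * ec A B (insert X Q) Q')"
    using sum.reindex[OF inj] by simp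
  also have "\<dots> = (\<Sum>Q\<in>Pow T0. - ((-1::int)^card Q * ec A B Q Q'))"
  proof (rule sum.cong)
    fix Q assume Q: "Q \<in> Pow T0"
    have fQ: "finite Q" "X \<notin> Q" using Q T finite_subset by auto
    have YQ: "Y \<notin> insert X Q" using Q assms T unfolding T0_def by auto
    have "ec A B (insert X Q) Q' = ec A B (insert X Q - {X}) Q'" by (rule ec_drop[OF assms(3,4) YQ])
    also have "insert X Q - {X} = Q" using fQ by auto
    finally show "(-1::int)^card (insert X Q) * ec A B (insert X Q) Q' = - ((-1::int)^card Q * ec A B Q Q')"
      using fQ by simp
  qed simp
  finally show ?thesis by (simp add: sum_negf)
qed

context stabK begin

lemma strand_not_circ: assumes c: "c < L" "bpos (w!c)" and j: "j \<in> {bidx (w!c), Suc (bidx (w!c))}"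
  shows "strand_circle w j \<notin> circles w m (insert c (vo w))"
proof
  let ?v = "insert c (vo w)"
  let ?i = "bidx (w!c)"
  assume S: "strand_circle w j \<in> circles w m ?v"
  have nv: "\<not> vertical w ?v c" unfolding vertical_def using c by simp
  have e: "((c,?i),(c,Suc ?i)) \<in> conn w m ?v" using adj_h0[OF c(1) nv] adj_conn by blast
  have ii: "1 \<le> ?i" "Suc ?i \<le> m" using bw_idx[OF bw c(1)] by auto
  have p1: "(c,?i) \<in> pts w m" "(c, Suc ?i) \<in> pts w m" using ii c unfolding pts_def by auto
  have cj: "(c,j) \<in> strand_circle w j" using c unfolding strand_circle_def by auto
  have Sj: "strand_circle w j = cls w m ?v (c,j)" using circ_mem[OF S cj] .
  show False
  proof (cases "j = ?i")
    case True
    hence "(c, Suc ?i) \<in> cls w m ?v (c,j)" using e p1 unfolding cls_def by auto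
    hence "(c, Suc ?i) \<in> strand_circle w j" using Sj by simp
    thus False using True unfolding strand_circle_def by auto
  next
    case False
    hence jj: "j = Suc ?i" using j by auto
    hence "(c, ?i) \<in> cls w m ?v (c,j)" using conn_sym[OF e] p1 unfolding cls_def by auto
    hence "(c, ?i) \<in> strand_circle w j" using Sj by simp
    thus False using jj unfolding strand_circle_def by auto
  qed
qed

end


definition Tset :: "bgen list \<Rightarrow> nat \<Rightarrow> bool \<Rightarrow> (nat\<times>nat) set set" where
  "Tset w m b = ext w m ` bar_circ w m b"

definition theta :: "bgen list \<Rightarrow> nat \<Rightarrow> bool \<Rightarrow> int \<Rightarrow> chain" where
  "theta w m b \<sigma> = (\<lambda>g. if g \<in> gens (ws w m) (Suc m) \<and> fst g = vo w \<and> snd g \<subseteq> Tset w m b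
     then \<sigma> * (-1)^card (snd g) else 0)"

context stabK begin

lemma AV: "circles w' (Suc m) (vo w) = ext w m ` circles w m (vo w)"
  using circles_E[OF bw m1 vo_notL] .

lemma T_sub: "Tset w m b \<subseteq> circles w' (Suc m) (vo w)"
  unfolding AV Tset_def using bar_circ by auto

lemma fin_T: "finite (Tset w m b)" using T_sub finite_circles finite_subset by blast

lemma strand_in: "1 \<le> j \<Longrightarrow> j \<le> m \<Longrightarrow> strand_circle w j \<in> circles w m (vo w)"
  unfolding circles_vo by auto

lemma strand_pts: "1 \<le> j \<Longrightarrow> j \<le> m \<Longrightarrow> strand_circle w j \<subseteq> pts w m"
  using strand_in circ_sub by blast

lemma theta_E: assumes g': "g' \<in> gens w' (Suc m)" "L \<notin> fst g'"
  shows "khdiff w' (Suc m) (theta w m b \<sigma>) g' = 0"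
proof -
  let ?\<theta> = "theta w m b \<sigma>"
  let ?T = "Tset w m b"
  let ?A = "circles w' (Suc m) (vo w)"
  let ?B = "circles w' (Suc m) (fst g')"
  define Sg where "Sg = (\<Sum>c\<in>{..<Suc L} - vo w. if fst g' = insert c (vo w) then (-1::int)^card {c' \<in> vo w. c' < c} else 0)"
  have gQ: "(vo w, Q) \<in> gens w' (Suc m)" if "Q \<subseteq> ?T" for Q
    using that T_sub[of b] vo_sub[of w] unfolding gens_def by auto
  have dc: "dcoef w' (Suc m) (vo w, Q) g' = Sg * ec ?A ?B Q (snd g')" if Q: "Q \<subseteq> ?T" for Q
  proof -
    have "dcoef w' (Suc m) (vo w, Q) g' = (\<Sum>c\<in>{..<Suc L} - vo w. if fst g' = insert c (vo w) then
        (-1::int)^card {c' \<in> vo w. c' < c} * ec ?A ?B Q (snd g') else 0)"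
      unfolding dcoef_def edge_coef_ec fst_conv snd_conv using gQ[OF Q] g'(1) by simp
    also have "\<dots> = (\<Sum>c\<in>{..<Suc L} - vo w. (if fst g' = insert c (vo w) then
        (-1::int)^card {c' \<in> vo w. c' < c} else 0) * ec ?A ?B Q (snd g'))"
      by (rule sum.cong) auto
    also have "\<dots> = Sg * ec ?A ?B Q (snd g')" unfolding Sg_def by (rule sum_distrib_right[symmetric])
    finally show ?thesis .
  qed
  have inj: "inj_on (\<lambda>Q. (vo w, Q)) (Pow ?T)" by (auto intro: inj_onI)
  have sub: "(\<lambda>Q. (vo w, Q)) ` Pow ?T \<subseteq> gens w' (Suc m)" using gQ by auto
  have "khdiff w' (Suc m) ?\<theta> g' = (\<Sum>g\<in>(\<lambda>Q. (vo w, Q)) ` Pow ?T. ?\<theta> g * dcoef w' (Suc m) g g')"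
    unfolding khdiff_def
  proof (rule sum.mono_neutral_right[OF finite_gens' sub])
    show "\<forall>g\<in>gens w' (Suc m) - (\<lambda>Q. (vo w, Q)) ` Pow ?T. ?\<theta> g * dcoef w' (Suc m) g g' = 0"
    proof
      fix g assume g: "g \<in> gens w' (Suc m) - (\<lambda>Q. (vo w, Q)) ` Pow ?T"
      have "?\<theta> g = 0"
      proof (rule ccontr)
        assume "?\<theta> g \<noteq> 0"
        hence "fst g = vo w" "snd g \<subseteq> ?T" unfolding theta_def by (auto split: if_splits)
        hence "g \<in> (\<lambda>Q. (vo w, Q)) ` Pow ?T" by (cases g) auto
        thus False using g by simp
      qed
      thus "?\<theta> g * dcoef w' (Suc m) g g' = 0" by simp
    qed
  qed
  also have "\<dots> = (\<Sum>Q\<in>Pow ?T. ?\<theta> (vo w, Q) * dcoef w' (Suc m) (vo w, Q) g')"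
    using sum.reindex[OF inj] by simp
  also have "\<dots> = (\<Sum>Q\<in>Pow ?T. \<sigma> * Sg * ((-1)^card Q * ec ?A ?B Q (snd g')))"
  proof (rule sum.cong)
    fix Q assume Q: "Q \<in> Pow ?T"
    have "?\<theta> (vo w, Q) = \<sigma> * (-1)^card Q" unfolding theta_def using gQ Q by auto
    thus "?\<theta> (vo w, Q) * dcoef w' (Suc m) (vo w, Q) g' = \<sigma> * Sg * ((-1)^card Q * ec ?A ?B Q (snd g'))"
      using dc Q by simp
  qed simp
  also have "\<dots> = \<sigma> * Sg * (\<Sum>Q\<in>Pow ?T. (-1)^card Q * ec ?A ?B Q (snd g'))"
    by (rule sum_distrib_left[symmetric])
  also have "\<dots> = 0"
  proof (cases "Sg = 0")
    case True thus ?thesis by simp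
  next
    case False
    have "\<exists>c \<in> {..<Suc L} - vo w. fst g' = insert c (vo w)"
    proof (rule ccontr)
      assume "\<not> (\<exists>c \<in> {..<Suc L} - vo w. fst g' = insert c (vo w))"
      hence "Sg = 0" unfolding Sg_def by (intro sum.neutral) auto
      thus False using False by simp
    qed
    then obtain c where c: "c \<in> {..<Suc L} - vo w" "fst g' = insert c (vo w)" by blast
    have cL: "c < L" using c g'(2) by (auto simp: less_Suc_eq)
    have bp: "bpos (w!c)" using c cL unfolding vo_def by auto
    let ?i = "bidx (w!c)"
    have ii: "1 \<le> ?i" "Suc ?i \<le> m" using bw_idx[OF bw cL] by auto
    have B: "?B = ext w m ` circles w m (insert c (vo w))"
      using circles_E[OF bw m1, of "insert c (vo w)"] c(2) cL vo_notL by simp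
    define jX where "jX = (if even ?i = b then ?i else Suc ?i)"
    define jY where "jY = (if even ?i = b then Suc ?i else ?i)"
    have jXY: "jX \<in> {?i, Suc ?i}" "jY \<in> {?i, Suc ?i}" "1 \<le> jX" "jX \<le> m" "1 \<le> jY" "jY \<le> m"
      "even jX = b" "even jY \<noteq> b" unfolding jX_def jY_def using ii by auto
    have notB: "ext w m (strand_circle w j) \<notin> ?B" if j: "j \<in> {?i, Suc ?i}" "1 \<le> j" "j \<le> m" for j
    proof
      assume "ext w m (strand_circle w j) \<in> ?B"
      then obtain C where C: "C \<in> circles w m (insert c (vo w))" "ext w m (strand_circle w j) = ext w m C"
        unfolding B by auto
      have "strand_circle w j = C" using ext_inj[OF strand_pts[OF j(2,3)] circ_sub[OF C(1)] C(2)] .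
      thus False using strand_not_circ[OF cL bp j(1)] C(1) by simp
    qed
    have XT: "ext w m (strand_circle w jX) \<in> ?T"
      unfolding Tset_def bar_circ_def using jXY by auto
    have YA: "ext w m (strand_circle w jY) \<in> ?A" unfolding AV using strand_in jXY by auto
    have YT: "ext w m (strand_circle w jY) \<notin> ?T"
    proof
      assume "ext w m (strand_circle w jY) \<in> ?T"
      then obtain D where D: "D \<in> bar_circ w m b" "ext w m (strand_circle w jY) = ext w m D"
        unfolding Tset_def by auto
      have Dc: "D \<in> circles w m (vo w)" using D(1) bar_circ by auto
      have "strand_circle w jY = D" using ext_inj[OF strand_pts[OF jXY(5,6)] circ_sub[OF Dc] D(2)] .
      then obtain j' where "strand_circle w jY = strand_circle w j'" "even j' = b" using D(1)
        unfolding bar_circ_def by auto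
      thus False using strand_inj jXY by auto
    qed
    have "(\<Sum>Q\<in>Pow ?T. (-1::int)^card Q * ec ?A ?B Q (snd g')) = 0"
      by (rule cancel[OF fin_T XT notB[OF jXY(1,3,4)] _ YT]) (use YA notB[OF jXY(2,5,6)] in simp)
    thus ?thesis by simp
  qed
  finally show ?thesis .
qed

end


context stabK begin

lemma theta_Esupp: "Esupp (theta w m b \<sigma>)"
  unfolding Esupp_def theta_def using vo_notL by auto

lemma theta_Egen: assumes "(v,P) \<in> gens w m"
  shows "theta w m b \<sigma> (Egen w m (v,P)) = \<sigma> * psi w m b (v,P)"
proof (cases "v = vo w")
  case True
  have P: "P \<subseteq> circles w m (vo w)" using assms True unfolding gens_def by auto
  have i: "ext w m ` P \<subseteq> Tset w m b \<longleftrightarrow> P \<subseteq> bar_circ w m b"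
    unfolding Tset_def using inj_on_image_subset_iff'[OF injE[of "vo w"] P bar_circ[of b]] .
  have c: "card (ext w m ` P) = card P" using card_image inj_on_subset[OF injE P] by blast
  show ?thesis unfolding theta_def psi_def Egen_def using Egen_gens[OF assms] True i c
    by (simp add: Egen_def)
next
  case False thus ?thesis unfolding theta_def psi_def Egen_def by simp
qed

lemma psi_ins: assumes "(vo w, P) \<in> gens w m"
  shows "(if C0 w m (vo w) \<in> P then -1 else 1) * psi w m b (vo w, insert (C0 w m (vo w)) P)
     = (if even m = b then - psi w m b (vo w, P) else 0)"
proof -
  have P: "P \<subseteq> circles w m (vo w)" using assms unfolding gens_def by auto
  have fin: "finite P" using P finite_circles finite_subset by blast
  have sb: "strand_circle w m \<in> bar_circ w m b \<longleftrightarrow> even m = b"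
    unfolding bar_circ_def using m1 strand_inj by auto
  show ?thesis
  proof (cases "even m = b")
    case True
    thus ?thesis unfolding psi_def C0_vo using True sb fin by (auto simp: card_insert_if)
  next
    case False
    thus ?thesis unfolding psi_def C0_vo using False sb by auto
  qed
qed

lemma Dgen_inj: assumes "(v,P) \<in> gens w m" "(v1,P1) \<in> gens w m" "Dgen w m (v,P) = Dgen w m (v1,P1)"
  shows "(v,P) = (v1,P1)"
proof -
  have vv: "L \<notin> v" "L \<notin> v1" using assms gens_v by auto
  have "insert L v = insert L v1" using assms(3) unfolding Dgen_def by simp
  hence v: "v = v1" using vv by (metis insert_ident)
  have P: "P \<subseteq> circles w m v" "P1 \<subseteq> circles w m v" using assms v unfolding gens_def by auto
  have U: "U0 w m \<notin> lift w ` Q" if "Q \<subseteq> circles w m v" for Q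
  proof
    assume "U0 w m \<in> lift w ` Q"
    then obtain C where "C \<in> Q" "U0 w m = lift w C" by auto
    hence "C \<in> circles w m v" "U0 w m = lift w C" using that by auto
    thus False using lift_ne_U0[OF circ_sub[of C w m v]] by simp
  qed
  have "insert (U0 w m) (lift w ` P) = insert (U0 w m) (lift w ` P1)" using assms(3) unfolding Dgen_def by simp
  hence "lift w ` P = lift w ` P1" using U[OF P(1)] U[OF P(2)] by (metis insert_ident)
  hence "P = P1" using inj_on_image_eq_iff[OF injL P] by simp
  thus ?thesis using v by simp
qed

lemma stab_f_D: assumes "k \<in> gens w m" shows "stab_f w m z (Dgen w m k) = z k"
proof -
  have "stab_f w m z (Dgen w m k) = (\<Sum>k'\<in>gens w m. if k' = k then z k' else 0)"
    unfolding stab_f_def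
  proof (rule sum.cong)
    fix k' assume k': "k' \<in> gens w m"
    have "Dgen w m k = Dgen w m k' \<longleftrightarrow> k' = k"
      using Dgen_inj[of "fst k" "snd k" "fst k'" "snd k'"] assms k' by auto
    thus "z k' * (if Dgen w m k = Dgen w m k' then 1 else 0) = (if k' = k then z k' else 0)" by simp
  qed simp
  also have "\<dots> = z k" using assms finite_gens by (simp add: sum.delta')
  finally show ?thesis .
qed

lemma stab_f_nD: assumes "\<forall>k\<in>gens w m. g \<noteq> Dgen w m k" shows "stab_f w m z g = 0"
  unfolding stab_f_def using assms by (intro sum.neutral) auto

lemma khdiff_out: "g \<notin> gens w' (Suc m) \<Longrightarrow> khdiff w' (Suc m) d g = 0"
  unfolding khdiff_def dcoef_def by simp

lemma psi'_out: "g \<notin> gens w' (Suc m) \<Longrightarrow> psi w' (Suc m) b g = 0"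
proof -
  interpret K': stabK w' "Suc m" by unfold_locales (use bw_ws[OF bw m1] in auto)
  show "g \<notin> gens w' (Suc m) \<Longrightarrow> psi w' (Suc m) b g = 0" using K'.psi_supp by blast
qed

lemma psi'_E: "L \<notin> fst g \<Longrightarrow> psi w' (Suc m) b g = 0"
  unfolding psi_def vo_ws by auto

lemma part2_eq:
  fixes b :: bool
  defines "\<epsilon> \<equiv> (if even m = b then 1 else -1::int)"
  and "\<sigma> \<equiv> (if even m = b then - ((-1)^card (vo w)) else (-1::int)^card (vo w))"
  shows "stab_f w m (psi w m b) = (\<lambda>g. \<epsilon> * psi w' (Suc m) b g + khdiff w' (Suc m) (theta w m b \<sigma>) g)"
proof
  fix g
  show "stab_f w m (psi w m b) g = \<epsilon> * psi w' (Suc m) b g + khdiff w' (Suc m) (theta w m b \<sigma>) g"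
  proof (cases "g \<in> gens w' (Suc m)")
    case False
    have "stab_f w m (psi w m b) g = 0" using False Dgen_gens by (intro stab_f_nD) auto
    thus ?thesis using False khdiff_out psi'_out by simp
  next
    case gin: True
    show ?thesis
    proof (cases "L \<in> fst g")
      case False
      have "stab_f w m (psi w m b) g = 0" using False by (intro stab_f_nD) (auto simp: Dgen_def)
      thus ?thesis using theta_E[OF gin False] psi'_E[OF False] by simp
    next
      case True
      then obtain k where k: "k \<in> gens w m" "g = (if U0 w m \<in> snd g then Dgen w m k else Fgen w m k)"
        using FD_surj[OF gin] by blast
      obtain v P where vP: "k = (v,P)" by (cases k)
      have gk: "(v,P) \<in> gens w m" using k vP by simp
      show ?thesis
      proof (cases "U0 w m \<in> snd g")
        case False
        hence g: "g = Fgen w m (v,P)" using k vP by simp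
        have "stab_f w m (psi w m b) g = 0"
        proof (rule stab_f_nD, rule ballI)
          fix k' assume "k' \<in> gens w m"
          have "U0 w m \<in> snd (Dgen w m k')" unfolding Dgen_def by simp
          thus "g \<noteq> Dgen w m k'" using False by auto
        qed
        moreover have "khdiff w' (Suc m) (theta w m b \<sigma>) g = (-1)^card v * (\<sigma> * psi w m b (v,P))"
          using KEY_F[OF theta_Esupp gk] theta_Egen[OF gk] g by simp
        moreover have "psi w' (Suc m) b g = psi w m b (v,P)" using psiK'_F[OF gk] g by simp
        moreover have "\<epsilon> * psi w m b (v,P) + (-1)^card v * (\<sigma> * psi w m b (v,P)) = 0"
        proof (cases "v = vo w")
          case True thus ?thesis unfolding \<epsilon>_def \<sigma>_def using neg1_sq[of "card (vo w)"]
            by (simp add: algebra_simps)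
        next
          case False thus ?thesis unfolding psi_def by simp
        qed
        ultimately show ?thesis by simp
      next
        case True
        hence g: "g = Dgen w m (v,P)" using k vP by simp
        have ig: "(v, insert (C0 w m v) P) \<in> gens w m" using ins_gens[OF gk] .
        have "stab_f w m (psi w m b) g = psi w m b (v,P)" using stab_f_D[OF gk] g by simp
        moreover have "khdiff w' (Suc m) (theta w m b \<sigma>) g =
            (-1)^card v * (if C0 w m v \<in> P then -1 else 1) * (\<sigma> * psi w m b (v, insert (C0 w m v) P))"
          using KEY_D[OF theta_Esupp gk] theta_Egen[OF ig] g by simp
        moreover have "psi w' (Suc m) b g = (if even (Suc m) = b then - psi w m b (v,P) else 0)"
          using psiK'_D[OF gk] g by simp
        moreover have "psi w m b (v,P) = \<epsilon> * (if even (Suc m) = b then - psi w m b (v,P) else 0) +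
            (-1)^card v * (if C0 w m v \<in> P then -1 else 1) * (\<sigma> * psi w m b (v, insert (C0 w m v) P))"
        proof (cases "v = vo w")
          case True
          have pi: "(if C0 w m (vo w) \<in> P then -1 else 1) * psi w m b (vo w, insert (C0 w m (vo w)) P)
             = (if even m = b then - psi w m b (vo w, P) else 0)" using psi_ins gk True by simp
          have "(-1)^card v * (if C0 w m v \<in> P then -1 else 1) * (\<sigma> * psi w m b (v, insert (C0 w m v) P))
             = (-1)^card v * \<sigma> * ((if C0 w m (vo w) \<in> P then -1 else 1) * psi w m b (vo w, insert (C0 w m (vo w)) P))"
            using True by (simp add: algebra_simps)
          also have "\<dots> = (-1)^card (vo w) * \<sigma> * (if even m = b then - psi w m b (vo w, P) else 0)"
            using pi True by simp
          finally show ?thesis unfolding \<epsilon>_def \<sigma>_def using True neg1_sq[of "card (vo w)"]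
            by (cases "even m = b") (simp_all add: algebra_simps)
        next
          case False thus ?thesis unfolding psi_def by simp
        qed
        ultimately show ?thesis by simp
      qed
    qed
  qed
qed

end


lemma prod_sign: assumes "finite A" "P \<subseteq> A"
  shows "(\<Prod>C\<in>A. if C \<in> T then (if C \<in> P then -1 else 1) else (if C \<in> P then 0 else (1::int)))
     = (if P \<subseteq> T then (-1)^card P else 0)"
proof (cases "P \<subseteq> T")
  case True
  have "(\<Prod>C\<in>A. if C \<in> T then (if C \<in> P then -1 else 1) else (if C \<in> P then 0 else (1::int)))
      = (\<Prod>C\<in>A. if C \<in> P then -1 else (1::int))"
    by (rule prod.cong) (use True in auto)
  also have "\<dots> = (\<Prod>C\<in>A \<inter> {x. x \<in> P}. -1) * (\<Prod>C\<in>A \<inter> - {x. x \<in> P}. 1)"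
    by (rule prod.If_cases[OF assms(1)])
  also have "A \<inter> {x. x \<in> P} = P" using assms(2) by auto
  finally show ?thesis using True by simp
next
  case False
  then obtain C where "C \<in> P" "C \<notin> T" by auto
  hence "(\<Prod>C\<in>A. if C \<in> T then (if C \<in> P then -1 else 1) else (if C \<in> P then 0 else (1::int))) = 0"
    using assms by (intro prod_zero) auto
  thus ?thesis using False by simp
qed

lemma nneg_ws: "nneg (ws w m) = Suc (nneg w)" unfolding nneg_def by simp
lemma npos_ws: "npos (ws w m) = npos w" unfolding npos_def by simp
lemma card_vo: "card (vo w) = nneg w"
  unfolding vo_def nneg_def using length_filter_conv_card[of "\<lambda>e. \<not> bpos e" w] by simp

context stabK begin

lemma card_A': "card (circles w' (Suc m) (vo w)) \<le> m"
proof -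
  have "card (circles w' (Suc m) (vo w)) \<le> card (circles w m (vo w))" unfolding AV by (rule card_image_le[OF finite_circles])
  also have "\<dots> \<le> card {1..m}" unfolding circles_vo by (rule card_image_le) simp
  finally show ?thesis by simp
qed

lemma theta_inF: "in_F w' (Suc m) (sl w' (Suc m)) (-1) (theta w m b \<sigma>)"
  unfolding in_F_def
proof (intro allI impI)
  fix g assume h: "theta w m b \<sigma> g \<noteq> 0"
  hence g: "g \<in> gens w' (Suc m)" "fst g = vo w" "snd g \<subseteq> Tset w m b" unfolding theta_def by (auto split: if_splits)
  have "card (circles w' (Suc m) (fst g) - snd g) \<le> card (circles w' (Suc m) (fst g))"
    by (rule card_mono[OF finite_circles Diff_subset])
  hence "card (circles w' (Suc m) (fst g) - snd g) \<le> m" using g(2) card_A' by simp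
  thus "g \<in> gens w' (Suc m) \<and> grh w' g = -1 \<and> sl w' (Suc m) \<le> grq w' (Suc m) g"
    using g unfolding grh_def grq_def sl_def nneg_ws npos_ws by (auto simp: card_vo)
qed

abbreviation "Q4 \<equiv> {(L, m), (L, Suc m), (Suc L, m), (Suc L, Suc m)}"

lemma strand_bar: assumes "1 \<le> j" "j \<le> m" shows "strand_circle w j \<in> bar_circ w m b \<longleftrightarrow> even j = b"
proof
  assume "strand_circle w j \<in> bar_circ w m b"
  then obtain j' where "strand_circle w j = strand_circle w j'" "even j' = b" unfolding bar_circ_def by blast
  thus "even j = b" using strand_inj[of w j j'] by simp
next
  assume "even j = b" thus "strand_circle w j \<in> bar_circ w m b" unfolding bar_circ_def using assms by blast
qed

lemma NQ_char: assumes C: "C \<in> circles w' (Suc m) (vo w)" "C \<inter> Q4 = {}"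
  shows "\<exists>j. 1 \<le> j \<and> j < m \<and> C = strand_circle w' j \<and> (C \<in> Tset w m b \<longleftrightarrow> even j = b)"
proof -
  have "C \<in> ext w m ` (strand_circle w ` {1..m})" using C(1) unfolding AV circles_vo .
  then obtain D where D: "D \<in> strand_circle w ` {1..m}" "C = ext w m D" by (rule imageE)
  from D(1) obtain j where jj: "j \<in> {1..m}" "D = strand_circle w j" by (rule imageE)
  have j: "1 \<le> j" "j \<le> m" "C = ext w m (strand_circle w j)" using jj D by auto
  have jm: "j \<noteq> m"
  proof
    assume jm: "j = m"
    have "(L,m) \<in> strand_circle w m" unfolding strand_circle_def by simp
    hence "(L,m) \<in> ext w m (strand_circle w m)" unfolding ext_def lift_def by simp
    hence "(L,m) \<in> C" using j jm by simp
    moreover have "(L,m) \<in> Q4" by simp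
    ultimately show False using C(2) by blast
  qed
  have nl: "(L,m) \<notin> strand_circle w j" using jm unfolding strand_circle_def by simp
  have Cs: "C = strand_circle w' j" using j(3) ext_nlm[OF nl] strand_lift[of w m j] by simp
  have "C \<in> Tset w m b \<longleftrightarrow> strand_circle w j \<in> bar_circ w m b"
    unfolding Tset_def j(3) using inj_on_image_mem_iff[OF injE strand_in[OF j(1,2)] bar_circ[of b]] .
  also have "\<dots> \<longleftrightarrow> even j = b" using strand_bar[OF j(1,2)] .
  finally have "C \<in> Tset w m b \<longleftrightarrow> even j = b" .
  moreover have "j < m" using j(2) jm by simp
  ultimately show ?thesis using Cs j(1) by blast
qed

lemma theta_local: "is_local w' (Suc m) b {L} Q4 (theta w m b \<sigma>)"
proof -
  let ?A = "circles w' (Suc m) (vo w)"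
  let ?T = "Tset w m b"
  let ?f = "\<lambda>C x. if C \<in> ?T then (if x then -1 else 1) else (if x then 0 else (1::int))"
  define u where "u = (\<lambda>v R. if v = vo w then \<sigma> * (\<Prod>C\<in>?A \<inter> {C. C \<inter> Q4 \<noteq> {}}. ?f C (C \<in> R)) else 0)"
  have part1: "\<forall>g. theta w m b \<sigma> g \<noteq> 0 \<longrightarrow> g \<in> gens w' (Suc m) \<and>
      (\<forall>k<length w'. k \<notin> {L} \<longrightarrow> (k \<in> fst g \<longleftrightarrow> k \<in> vo w'))"
    unfolding theta_def vo_ws by auto
  have part2: "theta w m b \<sigma> (v, P) = u v (P \<inter> {C \<in> circles w' (Suc m) v. C \<inter> Q4 \<noteq> {}})
        * (\<Prod>C \<in> {C \<in> circles w' (Suc m) v. C \<inter> Q4 = {}}. canon_coef w' (Suc m) b C (C \<in> P))"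
    if vP: "(v, P) \<in> gens w' (Suc m)" for v P
  proof (cases "v = vo w")
    case False thus ?thesis unfolding theta_def u_def by simp
  next
    case True
    have P: "P \<subseteq> ?A" using vP True unfolding gens_def by auto
    have fA: "finite ?A" by (rule finite_circles)
    have "theta w m b \<sigma> (v,P) = \<sigma> * (if P \<subseteq> ?T then (-1)^card P else 0)"
      unfolding theta_def using vP True by simp
    also have "\<dots> = \<sigma> * (\<Prod>C\<in>?A. ?f C (C \<in> P))" using prod_sign[OF fA P] by simp
    also have "(\<Prod>C\<in>?A. ?f C (C \<in> P)) = (\<Prod>C\<in>?A \<inter> {C. C \<inter> Q4 \<noteq> {}}. ?f C (C \<in> P)) * (\<Prod>C\<in>?A - {C. C \<inter> Q4 \<noteq> {}}. ?f C (C \<in> P))"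
      by (rule prod.Int_Diff[OF fA])
    also have "(\<Prod>C\<in>?A \<inter> {C. C \<inter> Q4 \<noteq> {}}. ?f C (C \<in> P)) = (\<Prod>C\<in>?A \<inter> {C. C \<inter> Q4 \<noteq> {}}. ?f C (C \<in> P \<inter> {C \<in> circles w' (Suc m) v. C \<inter> Q4 \<noteq> {}}))"
      by (rule prod.cong) (use True in auto)
    also have "(\<Prod>C\<in>?A - {C. C \<inter> Q4 \<noteq> {}}. ?f C (C \<in> P)) = (\<Prod>C \<in> {C \<in> circles w' (Suc m) v. C \<inter> Q4 = {}}. canon_coef w' (Suc m) b C (C \<in> P))"
    proof (rule prod.cong)
      show "?A - {C. C \<inter> Q4 \<noteq> {}} = {C \<in> circles w' (Suc m) v. C \<inter> Q4 = {}}" using True by auto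
    next
      fix C assume "C \<in> {C \<in> circles w' (Suc m) v. C \<inter> Q4 = {}}"
      hence C: "C \<in> ?A" "C \<inter> Q4 = {}" using True by auto
      obtain j where j: "1 \<le> j" "j < m" "C = strand_circle w' j" "C \<in> ?T \<longleftrightarrow> even j = b"
        using NQ_char[OF C] by blast
      have bb: "C \<in> bar_circ w' (Suc m) b \<longleftrightarrow> even j = b" unfolding bar_circ_def j(3) using strand_inj j by auto
      have ex: "\<exists>j. 1 \<le> j \<and> j \<le> Suc m \<and> C = strand_circle w' j" using j by auto
      show "?f C (C \<in> P) = canon_coef w' (Suc m) b C (C \<in> P)"
        unfolding canon_coef_def using bb j(4) ex by auto
    qed
    finally show ?thesis unfolding u_def using True by (simp add: mult.assoc)
  qed
  show ?thesis unfolding is_local_def using part1 part2 by blast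
qed

end

theorem proposition4p7:
  fixes w :: "bgen list" and m :: nat and b :: bool
  assumes "1 \<le> m" and "braid_word m w"
  shows "(\<exists>\<theta>. in_F w m (sl (w @ [SigInv m]) (Suc m)) (-1) \<theta>
             \<and> is_local w m b {} {(length w, m)} \<theta>
             \<and> (\<exists>\<epsilon> \<in> {1, -1::int}.
                  stab_g w m (psi (w @ [SigInv m]) (Suc m) b)
                    = (\<lambda>g. \<epsilon> * psi w m b g + khdiff w m \<theta> g)))
       \<and> (\<exists>\<theta>'. in_F (w @ [SigInv m]) (Suc m) (sl (w @ [SigInv m]) (Suc m)) (-1) \<theta>'
             \<and> is_local (w @ [SigInv m]) (Suc m) b {length w}
                 {(length w, m), (length w, Suc m), (Suc (length w), m), (Suc (length w), Suc m)} \<theta>'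
             \<and> (\<exists>\<epsilon> \<in> {1, -1::int}.
                  stab_f w m (psi w m b)
                    = (\<lambda>g. \<epsilon> * psi (w @ [SigInv m]) (Suc m) b g
                           + khdiff (w @ [SigInv m]) (Suc m) \<theta>' g)))"
proof -
  interpret stabK w m using assms by unfold_locales auto
  have c1: "in_F w m (sl (w @ [SigInv m]) (Suc m)) (-1) (\<lambda>_. 0)" unfolding in_F_def by simp
  have c2: "is_local w m b {} {(length w, m)} (\<lambda>_. 0)" unfolding is_local_def by (intro conjI) (simp, rule exI[of _ "\<lambda>_ _. 0"], simp)
  have A: "\<exists>\<theta>. in_F w m (sl (w @ [SigInv m]) (Suc m)) (-1) \<theta>
             \<and> is_local w m b {} {(length w, m)} \<theta>
             \<and> (\<exists>\<epsilon> \<in> {1, -1::int}.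
                  stab_g w m (psi (w @ [SigInv m]) (Suc m) b)
                    = (\<lambda>g. \<epsilon> * psi w m b g + khdiff w m \<theta> g))"
    using c1 c2 part1[of b] by blast
  define \<sigma> where "\<sigma> = (if even m = b then - ((-1)^card (vo w)) else (-1::int)^card (vo w))"
  define \<epsilon> where "\<epsilon> = (if even m = b then 1 else -1::int)"
  have e: "\<epsilon> \<in> {1, -1}" unfolding \<epsilon>_def by simp
  have B: "stab_f w m (psi w m b) = (\<lambda>g. \<epsilon> * psi w' (Suc m) b g + khdiff w' (Suc m) (theta w m b \<sigma>) g)"
    unfolding \<epsilon>_def \<sigma>_def by (rule part2_eq)
  show ?thesis using A theta_inF[of b \<sigma>] theta_local[of b \<sigma>] B e by blast
qed


end
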